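(* Let $\mathfrak S=(\mathcal S,\mathcal U,T_{\mathfrak s})$ be a controlled Markov process with parity specification $\mathit{Parity}(\mathcal P)$, $\mathcal P=\langle B_1,\dots,B_\ell\rangle$, and let $\langle\mathcal G,\widehat{\mathcal P}\rangle$ be the abstract $2\frac12$-player parity game induced by $\mathfrak S$ (for a given priority-consistent finite partition $\widehat{\mathcal S}$ and given functions $\overline F,\underline F$ as described in the context). Suppose $\widehat s\in V_0$ and $\pi_0$ is a deterministic memoryless strategy of Player 0 such that for every strategy $\pi_1$ of Player 1, $P_{\widehat s}^{\pi_0,\pi_1}(\mathcal G\models\mathit{Parity}(\widehat{\mathcal P}))=1$. Then the refinement $\rho$ of $\pi_0$ satisfies $\widehat s\subseteq\mathsf{WinDom}(\mathfrak S,\rho)$.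
   Context: CMP: $\mathfrak S=(\mathcal S,\mathcal U,T_{\mathfrak s})$ with $\mathcal S$ a Borel space, $\mathcal U$ finite, and $T_{\mathfrak s}(\cdot\mid s,u)$ a probability measure on the Borel sets of $\mathcal S$ for each $s,u$. A stationary policy is a universally measurable $\rho:\mathcal S\to\mathcal U$; $P_s^\rho$ is the induced measure on infinite paths $(s^0,s^1,\dots)$ with $s^0=s$, $s^{k+1}\sim T_{\mathfrak s}(\cdot\mid s^k,\rho(s^k))$. $\mathcal P=\langle B_1,\dots,B_\ell\rangle$ is a partition of $\mathcal S$ into measurable sets (some possibly empty); a sequence satisfies $\mathit{Parity}(\mathcal P)$ iff for every odd $i$, if $B_i$ is visited infinitely often then some $B_j$ with $j>i$ even is visited infinitely often. $\mathsf{WinDom}(\mathfrak S,\rho)=\{s\mid P_s^\rho(\mathfrak S\models\mathit{Parity}(\mathcal P))=1\}$. Abstraction: $\widehat{\mathcal S}$ is a finite partition of $\mathcal S$ into nonempty (measurable) cells such that each cell is contained in a single $B_i$. $Q:\mathcal S\to\widehat{\mathcal S}$ maps $s$ to the cell containing it; $Q^{-1}(\widehat U)=\bigcup_{\widehat s\in\widehat U}\widehat s$. Functions $\overline F,\underline F:\widehat{\mathcal S}\times\mathcal U\to 2^{\widehat{\mathcal S}}$ satisfy $\overline F(\widehat s,u)\supseteq\{\widehat s'\mid\exists s\in\widehat s.\ T_{\mathfrak s}(\widehat s'\mid s,u)>0\}$ and $\underline F(\widehat s,u)\subseteq\{\widehat s'\mid\exists\varepsilon>0\ \forall s\in\widehat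 s.\ T_{\mathfrak s}(\widehat s'\mid s,u)\ge\varepsilon\}$. Game graph $\mathcal G=\langle V,E,\langle V_0,V_1,V_r\rangle\rangle$: $V_0=\widehat{\mathcal S}$, $V_1=\widehat{\mathcal S}\times\mathcal U$, $V_r=\bigcup_{v_1\in V_1}V_r(v_1)$ where $V_r(v_1)=\{v_r\subseteq\widehat{\mathcal S}\mid\underline F(v_1)\subseteq v_r\subseteq\overline F(v_1),\ 1\le|v_r|\le|\underline F(v_1)|+1\}$; edges: $E(v_0)=\{(v_0,u)\mid u\in\mathcal U\}$ for $v_0\in V_0$, $E(v_1)=V_r(v_1)$ for $v_1\in V_1$, $E(v_r)=\{v_0\in V_0\mid v_0\in v_r\}$ for $v_r\in V_r$. At $V_0$ (resp. $V_1$) vertices Player 0 (resp. Player 1) chooses a successor; at $V_r$ vertices the successor is chosen uniformly at random. Strategies of Player $i$ are maps $\pi_i:V^*V_i\to\mathit{Dist}(V)$ supported on successors of the last vertex; a deterministic memoryless Player 0 strategy assigns to each $v_0\in V_0$ a single successor $\pi_0(v_0)=(v_0,u)$. $P_v^{\pi_0,\pi_1}$ is the induced measure on runs. The abstract parity specification is $\widehat{\mathcal P}=\langle\widehat B_1,\dots,\widehat B_\ell\rangle$ with $\widehat B_i=\{v_0\in V_0\mid Q^{-1}(v_0)\subseteq B_i\}$; a run of $\mathcal G$ satisfies a specification over $V_0$ (here $\mathit{Parity}(\widehat{\mathcal P})$) iff its projection onto the subsequence of $V_0$-vertices satisfies it. Refinement: the refinement of a deterministic memoryless $\pi_0$ is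 the policy $\rho$ with $\rho(s)=u$ whenever $s\in\widehat s$ and $\pi_0(\widehat s)=(\widehat s,u)$. *)

theory Defs
  imports "HOL-Probability.Probability"
begin

definition parity :: "nat \<Rightarrow> (nat \<Rightarrow> 'a set) \<Rightarrow> 'a stream \<Rightarrow> bool" where
  "parity l C \<omega> \<longleftrightarrow>
     (\<forall>i\<in>{1..l}. odd i \<longrightarrow> (INFM n. \<omega> !! n \<in> C i) \<longrightarrow>
        (\<exists>j\<in>{1..l}. even j \<and> i < j \<and> (INFM n. \<omega> !! n \<in> C j)))"

definition is_CMP :: "('s::polish_space \<Rightarrow> 'u::finite \<Rightarrow> 's measure) \<Rightarrow> bool" where
  "is_CMP T \<longleftrightarrow> (\<forall>s u. prob_space (T s u) \<and> sets (T s u) = sets borel) \<and>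
                 (\<forall>u. (\<lambda>s. T s u) \<in> borel \<rightarrow>\<^sub>M prob_algebra borel)"

definition is_priority_partition :: "nat \<Rightarrow> (nat \<Rightarrow> 's::polish_space set) \<Rightarrow> bool" where
  "is_priority_partition l B \<longleftrightarrow>
     (\<forall>i\<in>{1..l}. B i \<in> sets borel) \<and>
     (\<forall>i\<in>{1..l}. \<forall>j\<in>{1..l}. i \<noteq> j \<longrightarrow> B i \<inter> B j = {}) \<and>
     (\<Union>i\<in>{1..l}. B i) = UNIV"

text \<open>The path measure P_s^K of a Markov kernel K (here K s = T(. | s, rho s)):
a measurable family of probability measures on infinite paths starting in s, characterised by
the one-step unfolding  P_s = (s^1 ~ K s) ; (s ## path from s^1).  This equation determines the
family uniquely (by induction on finite-dimensional marginals); it is the Ionescu-Tulcea measure.\<close>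
definition is_path_measure :: "('s::polish_space \<Rightarrow> 's measure) \<Rightarrow> ('s \<Rightarrow> 's stream measure) \<Rightarrow> bool" where
  "is_path_measure K P \<longleftrightarrow>
     P \<in> borel \<rightarrow>\<^sub>M prob_algebra (stream_space borel) \<and>
     (\<forall>s. P s = K s \<bind> (\<lambda>t. distr (P t) (stream_space borel) (\<lambda>\<omega>. s ## \<omega>)))"

definition WinDom :: "nat \<Rightarrow> (nat \<Rightarrow> 's set) \<Rightarrow> ('s \<Rightarrow> 's stream measure) \<Rightarrow> 's set" where
  "WinDom l B P = {s. measure (P s) {\<omega>. parity l B \<omega>} = 1}"

definition is_abstraction :: "nat \<Rightarrow> (nat \<Rightarrow> 's::polish_space set) \<Rightarrow> 's set set \<Rightarrow> bool" where
  "is_abstraction l B Sh \<longleftrightarrow>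
     finite Sh \<and> (\<forall>c\<in>Sh. c \<noteq> {} \<and> c \<in> sets borel) \<and>
     (\<forall>c\<in>Sh. \<forall>c'\<in>Sh. c \<noteq> c' \<longrightarrow> c \<inter> c' = {}) \<and> \<Union>Sh = UNIV \<and>
     (\<forall>c\<in>Sh. \<exists>i\<in>{1..l}. c \<subseteq> B i)"

definition cell_of :: "'s set set \<Rightarrow> 's \<Rightarrow> 's set" where
  "cell_of Sh s = (THE c. c \<in> Sh \<and> s \<in> c)"

definition valid_F :: "('s::polish_space \<Rightarrow> 'u \<Rightarrow> 's measure) \<Rightarrow> 's set set
     \<Rightarrow> ('s set \<Rightarrow> 'u \<Rightarrow> 's set set) \<Rightarrow> ('s set \<Rightarrow> 'u \<Rightarrow> 's set set) \<Rightarrow> bool" where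
  "valid_F T Sh Fo Fu \<longleftrightarrow>
     (\<forall>c\<in>Sh. \<forall>u.
        Fo c u \<subseteq> Sh \<and> Fu c u \<subseteq> Sh \<and>
        {c'\<in>Sh. \<exists>s\<in>c. measure (T s u) c' > 0} \<subseteq> Fo c u \<and>
        Fu c u \<subseteq> {c'\<in>Sh. \<exists>\<epsilon>>0. \<forall>s\<in>c. measure (T s u) c' \<ge> \<epsilon>})"

datatype ('s, 'u) gvert = GV0 "'s set" | GV1 "'s set" 'u | GVr "'s set set"

definition Vr_of :: "('s set \<Rightarrow> 'u \<Rightarrow> 's set set) \<Rightarrow> ('s set \<Rightarrow> 'u \<Rightarrow> 's set set)
     \<Rightarrow> 's set \<Rightarrow> 'u \<Rightarrow> 's set set set" where
  "Vr_of Fo Fu c u = {R. Fu c u \<subseteq> R \<and> R \<subseteq> Fo c u \<and> 1 \<le> card R \<and> card R \<le> card (Fu c u) + 1}"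

fun gsucc :: "('s set \<Rightarrow> 'u \<Rightarrow> 's set set) \<Rightarrow> ('s set \<Rightarrow> 'u \<Rightarrow> 's set set)
     \<Rightarrow> ('s, 'u) gvert \<Rightarrow> ('s, 'u) gvert set" where
  "gsucc Fo Fu (GV0 c) = {GV1 c u | u. True}"
| "gsucc Fo Fu (GV1 c u) = GVr ` Vr_of Fo Fu c u"
| "gsucc Fo Fu (GVr R) = GV0 ` R"

definition p1_strategy :: "'s set set \<Rightarrow> ('s set \<Rightarrow> 'u \<Rightarrow> 's set set) \<Rightarrow> ('s set \<Rightarrow> 'u \<Rightarrow> 's set set)
     \<Rightarrow> (('s, 'u) gvert list \<Rightarrow> ('s, 'u) gvert pmf) \<Rightarrow> bool" where
  "p1_strategy Sh Fo Fu \<pi>1 \<longleftrightarrow>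
     (\<forall>h c u. c \<in> Sh \<longrightarrow> set_pmf (\<pi>1 (h @ [GV1 c u])) \<subseteq> gsucc Fo Fu (GV1 c u))"

text \<open>One-step distribution after history h, for a deterministic memoryless Player 0 strategy
sigma (pi_0(c) = (c, sigma c)), a Player 1 strategy pi1, and uniform choice at random vertices.\<close>
definition gstep :: "('s set \<Rightarrow> 'u) \<Rightarrow> (('s, 'u) gvert list \<Rightarrow> ('s, 'u) gvert pmf)
     \<Rightarrow> ('s, 'u) gvert list \<Rightarrow> ('s, 'u) gvert pmf" where
  "gstep \<sigma> \<pi>1 h = (case last h of
       GV0 c \<Rightarrow> return_pmf (GV1 c (\<sigma> c))
     | GV1 c u \<Rightarrow> \<pi>1 h
     | GVr R \<Rightarrow> pmf_of_set (GV0 ` R))"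

abbreviation gruns :: "('s, 'u) gvert stream measure" where
  "gruns \<equiv> stream_space (count_space UNIV)"

text \<open>Q h is the distribution of the continuation of the play after the (nonempty) history h.
It is characterised by the one-step unfolding equation (Ionescu-Tulcea).\<close>
definition is_hist_measure :: "(('s, 'u) gvert list \<Rightarrow> ('s, 'u) gvert pmf)
     \<Rightarrow> (('s, 'u) gvert list \<Rightarrow> ('s, 'u) gvert stream measure) \<Rightarrow> bool" where
  "is_hist_measure stp Q \<longleftrightarrow>
     (\<forall>h. h \<noteq> [] \<longrightarrow> prob_space (Q h) \<and> sets (Q h) = sets gruns \<and>
        Q h = measure_pmf (stp h) \<bind> (\<lambda>w. distr (Q (h @ [w])) gruns (\<lambda>\<omega>. w ## \<omega>)))"

definition run_measure :: "(('s, 'u) gvert list \<Rightarrow> ('s, 'u) gvert stream measure)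
     \<Rightarrow> ('s, 'u) gvert \<Rightarrow> ('s, 'u) gvert stream measure" where
  "run_measure Q v = distr (Q [v]) gruns (\<lambda>\<omega>. v ## \<omega>)"

definition Bhat :: "'s set set \<Rightarrow> (nat \<Rightarrow> 's set) \<Rightarrow> nat \<Rightarrow> ('s, 'u) gvert set" where
  "Bhat Sh B i = GV0 ` {c \<in> Sh. c \<subseteq> B i}"

definition refine :: "'s set set \<Rightarrow> ('s set \<Rightarrow> 'u) \<Rightarrow> 's \<Rightarrow> 'u" where
  "refine Sh \<sigma> s = \<sigma> (cell_of Sh s)"

end

theory Submission
  imports Defs
begin

definition cdfq :: "nat pmf \<Rightarrow> nat \<Rightarrow> real" where
  "cdfq q n = (\<Sum>i<n. pmf q i)"

definition nidx :: "nat pmf \<Rightarrow> real \<Rightarrow> nat" where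
  "nidx q x = (if \<exists>n. x < cdfq q (Suc n) then LEAST n. x < cdfq q (Suc n) else 0)"

definition UU :: "real measure" where "UU = uniform_measure lborel {0..1}"

lemma sets_UU[simp, measurable_cong]: "sets UU = sets borel" and space_UU[simp]: "space UU = UNIV"
  by (auto simp: UU_def)

lemma prob_space_UU: "prob_space UU"
  unfolding UU_def by (rule prob_space_uniform_measure) auto

lemma emeasure_UU: "A \<in> sets borel \<Longrightarrow> emeasure UU A = emeasure lborel ({0..1} \<inter> A)"
  unfolding UU_def by (subst emeasure_uniform_measure) (auto simp: divide_ennreal_def)

lemma cdfq_mono: "m \<le> n \<Longrightarrow> cdfq q m \<le> cdfq q n"
  unfolding cdfq_def by (rule sum_mono2) auto

lemma cdfq_measure: "cdfq q n = measure (measure_pmf q) {..<n}"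
  unfolding cdfq_def by (simp add: measure_measure_pmf_finite)

lemma cdfq_nonneg: "0 \<le> cdfq q n"
  unfolding cdfq_def by (simp add: sum_nonneg)

lemma cdfq_le1: "cdfq q n \<le> 1"
  unfolding cdfq_measure by simp

lemma cdfq_lim: "(\<lambda>n. cdfq q n) \<longlonglongrightarrow> 1"
proof -
  have "(\<lambda>n. measure (measure_pmf q) {..<n}) \<longlonglongrightarrow> measure (measure_pmf q) (\<Union>n. {..<n})"
    by (rule measure_pmf.finite_Lim_measure_incseq) (auto simp: incseq_def)
  moreover have "(\<Union>n. {..<n::nat}) = UNIV" by auto
  ultimately show ?thesis unfolding cdfq_measure by simp
qed

lemma nidx_set: "{x. nidx q x = n} =
   {x. x < cdfq q (Suc n) \<and> (\<forall>m<n. cdfq q (Suc m) \<le> x)} \<union>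
   (if n = 0 then {x. \<forall>m. cdfq q (Suc m) \<le> x} else {})"
proof (intro set_eqI iffI)
  fix x assume "x \<in> {x. nidx q x = n}"
  then have e: "nidx q x = n" by simp
  show "x \<in> {x. x < cdfq q (Suc n) \<and> (\<forall>m<n. cdfq q (Suc m) \<le> x)} \<union>
   (if n = 0 then {x. \<forall>m. cdfq q (Suc m) \<le> x} else {})"
  proof (cases "\<exists>n. x < cdfq q (Suc n)")
    case True
    then have "nidx q x = (LEAST n. x < cdfq q (Suc n))" by (simp add: nidx_def)
    with e have "(LEAST n. x < cdfq q (Suc n)) = n" by simp
    moreover from True obtain k where "x < cdfq q (Suc k)" by auto
    ultimately have "x < cdfq q (Suc n)" "\<forall>m<n. \<not> x < cdfq q (Suc m)"
    proof -
      assume L: "(LEAST n. x < cdfq q (Suc n)) = n" and k: "x < cdfq q (Suc k)"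
      show "x < cdfq q (Suc n)" using LeastI[of "\<lambda>n. x < cdfq q (Suc n)" k, OF k] L by simp
      show "\<forall>m<n. \<not> x < cdfq q (Suc m)"
      proof (intro allI impI)
        fix m assume "m < n"
        then show "\<not> x < cdfq q (Suc m)" using not_less_Least[of m "\<lambda>n. x < cdfq q (Suc n)"] L by simp
      qed
    qed
    then show ?thesis by auto
  next
    case False
    then have "nidx q x = 0" by (simp add: nidx_def)
    with e False show ?thesis by (auto simp: not_less)
  qed
next
  fix x assume "x \<in> {x. x < cdfq q (Suc n) \<and> (\<forall>m<n. cdfq q (Suc m) \<le> x)} \<union>
   (if n = 0 then {x. \<forall>m. cdfq q (Suc m) \<le> x} else {})"
  then consider "x < cdfq q (Suc n)" "\<forall>m<n. cdfq q (Suc m) \<le> x" | "n = 0" "\<forall>m. cdfq q (Suc m) \<le> x"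
    by (auto split: if_splits)
  then show "x \<in> {x. nidx q x = n}"
  proof cases
    case 1
    then have "(LEAST n. x < cdfq q (Suc n)) = n"
      by (intro Least_equality) (auto simp: not_less[symmetric])
    with 1 show ?thesis by (auto simp: nidx_def)
  next
    case 2 then show ?thesis by (auto simp: nidx_def not_less[symmetric])
  qed
qed

lemma nidx_measurable[measurable]: "nidx q \<in> borel \<rightarrow>\<^sub>M count_space UNIV"
proof -
  have "\<And>n. {x. nidx q x = n} \<in> sets borel"
  proof -
    fix n
    have 1: "{x::real. x < cdfq q (Suc n) \<and> (\<forall>m<n. cdfq q (Suc m) \<le> x)} \<in> sets borel"
      by measurable
    have 2: "{x::real. \<forall>m. cdfq q (Suc m) \<le> x} \<in> sets borel"
      by measurable
    show "{x. nidx q x = n} \<in> sets borel"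
      unfolding nidx_set using 1 2 by (intro sets.Un) auto
  qed
  then show ?thesis
    by (auto simp: measurable_count_space_eq2_countable vimage_def)
qed

lemma nidx_measurable_UU[measurable]: "nidx q \<in> UU \<rightarrow>\<^sub>M count_space UNIV"
  using nidx_measurable by (simp add: measurable_cong_sets)

lemma emeasure_nidx: "emeasure UU {x. nidx q x = n} = pmf q n"
proof -
  let ?A = "{x. nidx q x = n}"
  have A: "?A \<in> sets borel" using nidx_measurable by (simp add: measurable_count_space_eq2_countable vimage_def)
  have sub1: "{cdfq q n..<cdfq q (Suc n)} \<subseteq> {0..1} \<inter> ?A"
  proof
    fix x assume x: "x \<in> {cdfq q n..<cdfq q (Suc n)}"
    then have "0 \<le> x" "x \<le> 1" using cdfq_nonneg[of q n] cdfq_le1[of q "Suc n"] by auto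
    moreover have "\<forall>m<n. cdfq q (Suc m) \<le> x"
    proof (intro allI impI)
      fix m assume "m < n"
      then have "cdfq q (Suc m) \<le> cdfq q n" by (intro cdfq_mono) auto
      with x show "cdfq q (Suc m) \<le> x" by auto
    qed
    ultimately show "x \<in> {0..1} \<inter> ?A" using x unfolding nidx_set by auto
  qed
  have sub2: "{0..1} \<inter> ?A \<subseteq> {cdfq q n..<cdfq q (Suc n)} \<union> {1}"
  proof
    fix x assume x: "x \<in> {0..1} \<inter> ?A"
    show "x \<in> {cdfq q n..<cdfq q (Suc n)} \<union> {1}"
    proof (cases "\<forall>m. cdfq q (Suc m) \<le> x")
      case True
      have "(\<lambda>m. cdfq q (Suc m)) \<longlonglongrightarrow> 1" using cdfq_lim[of q] by (rule LIMSEQ_Suc)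
      then have "1 \<le> x" using True by (intro LIMSEQ_le_const2) auto
      with x show ?thesis by auto
    next
      case False
      with x have x2: "x < cdfq q (Suc n)" "\<forall>m<n. cdfq q (Suc m) \<le> x" "0 \<le> x"
        unfolding nidx_set by (auto split: if_splits)
      have "cdfq q n \<le> x"
      proof (cases n)
        case 0 then show ?thesis using x2 by (simp add: cdfq_def)
      next
        case (Suc k) then show ?thesis using x2 by auto
      qed
      with x2 show ?thesis by auto
    qed
  qed
  have "emeasure lborel {cdfq q n..<cdfq q (Suc n)} \<le> emeasure lborel ({0..1} \<inter> ?A)"
    using sub1 A by (intro emeasure_mono) auto
  moreover have "emeasure lborel ({0..1} \<inter> ?A) \<le> emeasure lborel ({cdfq q n..<cdfq q (Suc n)} \<union> {1})"
    using sub2 by (intro emeasure_mono) auto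
  moreover have "emeasure lborel ({cdfq q n..<cdfq q (Suc n)} \<union> {1}) \<le>
      emeasure lborel {cdfq q n..<cdfq q (Suc n)} + emeasure lborel {1::real}"
    by (intro emeasure_subadditive) auto
  ultimately have "emeasure lborel ({0..1} \<inter> ?A) = emeasure lborel {cdfq q n..<cdfq q (Suc n)}"
    by (auto intro: antisym)
  also have "\<dots> = ennreal (cdfq q (Suc n) - cdfq q n)"
    using cdfq_mono[of n "Suc n" q] by simp
  also have "cdfq q (Suc n) - cdfq q n = pmf q n" by (simp add: cdfq_def)
  finally show ?thesis using A by (simp add: emeasure_UU)
qed

lemma distr_nidx: "distr UU (count_space UNIV) (nidx q) = measure_pmf q"
proof (rule measure_eqI_countable[where A=UNIV])
  fix a :: nat
  have "nidx q -` {a} \<inter> space UU = {x. nidx q x = a}" by auto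
  then show "emeasure (distr UU (count_space UNIV) (nidx q)) {a} = emeasure (measure_pmf q) {a}"
    by (simp add: emeasure_distr emeasure_nidx emeasure_pmf_single)
qed auto

lemma nidx_zero: "x < pmf q 0 \<Longrightarrow> nidx q x = 0"
proof -
  assume "x < pmf q 0"
  then have "x < cdfq q (Suc 0)" by (simp add: cdfq_def)
  then show ?thesis unfolding nidx_def by (auto intro!: Least_equality)
qed

definition enc :: "'a pmf \<Rightarrow> 'a \<Rightarrow> 'a \<Rightarrow> nat" where
  "enc p a b = (if b = a then 0 else Suc (to_nat_on (set_pmf p) b))"
definition dec :: "'a pmf \<Rightarrow> 'a \<Rightarrow> nat \<Rightarrow> 'a" where
  "dec p a n = (if n = 0 \<and> a \<in> set_pmf p then a else from_nat_into (set_pmf p) (n - 1))"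
definition samp :: "'a pmf \<Rightarrow> 'a \<Rightarrow> real \<Rightarrow> 'a" where
  "samp p a x = dec p a (nidx (map_pmf (enc p a) p) x)"

lemma samp_in: "samp p a x \<in> set_pmf p"
  unfolding samp_def dec_def using set_pmf_not_empty[of p]
  by (auto intro: from_nat_into)

lemma dec_enc: "b \<in> set_pmf p \<Longrightarrow> dec p a (enc p a b) = b"
  unfolding dec_def enc_def by (auto simp: countable_set_pmf)

lemma samp_measurable[measurable]: "samp p a \<in> UU \<rightarrow>\<^sub>M count_space UNIV"
  unfolding samp_def by measurable

lemma distr_samp: "distr UU (count_space UNIV) (samp p a) = measure_pmf p"
proof -
  have "distr UU (count_space UNIV) (samp p a) =
      distr (distr UU (count_space UNIV) (nidx (map_pmf (enc p a) p))) (count_space UNIV) (dec p a)"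
    unfolding samp_def by (subst distr_distr) (auto simp: comp_def)
  also have "\<dots> = distr (measure_pmf (map_pmf (enc p a) p)) (count_space UNIV) (dec p a)"
    by (simp add: distr_nidx)
  also have "\<dots> = measure_pmf (map_pmf (dec p a) (map_pmf (enc p a) p))"
    by (simp add: map_pmf_rep_eq)
  also have "map_pmf (dec p a) (map_pmf (enc p a) p) = p"
    by (simp add: pmf.map_comp comp_def dec_enc map_pmf_idI)
  finally show ?thesis .
qed

lemma samp_pref: "a \<in> set_pmf p \<Longrightarrow> x < pmf p a \<Longrightarrow> samp p a x = a"
proof -
  assume a: "a \<in> set_pmf p" and x: "x < pmf p a"
  have "pmf p a \<le> pmf (map_pmf (enc p a) p) 0"
    by (subst pmf_map) (auto simp: enc_def measure_pmf_single[symmetric] intro!: measure_pmf.finite_measure_mono)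
  then have "nidx (map_pmf (enc p a) p) x = 0" using x by (intro nidx_zero) auto
  then show ?thesis using a by (simp add: samp_def dec_def)
qed

abbreviation SS :: "real stream measure" where "SS \<equiv> stream_space UU"

lemma space_SS[simp]: "space SS = UNIV"
  by (simp add: space_stream_space)

lemma prob_space_SS: "prob_space SS"
  using prob_space_UU by (rule prob_space.prob_space_stream_space)

lemma emeasure_SS_split:
  assumes [measurable]: "A \<in> sets borel" "Y \<in> sets SS"
  shows "emeasure SS {\<omega>. shd \<omega> \<in> A \<and> stl \<omega> \<in> Y} = emeasure UU A * emeasure SS Y"
proof -
  have m: "{\<omega>. shd \<omega> \<in> A \<and> stl \<omega> \<in> Y} \<in> sets SS"
  proof -
    have "{\<omega>\<in>space SS. shd \<omega> \<in> A \<and> stl \<omega> \<in> Y} \<in> sets SS" by measurable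
    then show ?thesis by simp
  qed
  have "emeasure SS {\<omega>. shd \<omega> \<in> A \<and> stl \<omega> \<in> Y} =
      (\<integral>\<^sup>+t. emeasure SS {x\<in>space SS. t ## x \<in> {\<omega>. shd \<omega> \<in> A \<and> stl \<omega> \<in> Y}} \<partial>UU)"
    using m by (rule prob_space.emeasure_stream_space[OF prob_space_UU])
  also have "\<dots> = (\<integral>\<^sup>+t. emeasure SS Y * indicator A t \<partial>UU)"
    by (intro nn_integral_cong) (auto split: split_indicator)
  also have "\<dots> = emeasure SS Y * emeasure UU A"
    by (subst nn_integral_cmult_indicator) auto
  finally show ?thesis by (simp add: mult.commute)
qed

lemma emeasure_SS_stl:
  assumes [measurable]: "Y \<in> sets SS"
  shows "emeasure SS {\<omega>. stl \<omega> \<in> Y} = emeasure SS Y"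
  using emeasure_SS_split[of UNIV Y] prob_space.emeasure_space_1[OF prob_space_UU] by simp

lemma emeasure_SS_sdrop:
  assumes [measurable]: "Y \<in> sets SS"
  shows "emeasure SS {\<omega>. sdrop n \<omega> \<in> Y} = emeasure SS Y"
proof (induction n)
  case 0 then show ?case by simp
next
  case (Suc n)
  have m: "{\<omega>. sdrop n \<omega> \<in> Y} \<in> sets SS"
  proof -
    have "{\<omega>\<in>space SS. sdrop n \<omega> \<in> Y} \<in> sets SS" by measurable
    then show ?thesis by simp
  qed
  have "{\<omega>. sdrop (Suc n) \<omega> \<in> Y} = {\<omega>. stl \<omega> \<in> {\<omega>. sdrop n \<omega> \<in> Y}}" by simp
  then show ?case using emeasure_SS_stl[OF m] Suc by simp
qed

lemma emeasure_UU_less: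
  assumes "0 \<le> d" "d \<le> 1"
  shows "emeasure UU {x. x < d} = ennreal d"
proof -
  have "{0..1} \<inter> {x::real. x < d} = {0..<d}" using assms by auto
  then show ?thesis using assms by (subst emeasure_UU) auto
qed

definition win :: "nat \<Rightarrow> real \<Rightarrow> real stream \<Rightarrow> bool" where
  "win L d \<omega> \<longleftrightarrow> (\<forall>i<L. \<omega> !! i < d)"

lemma win_measurable[measurable]: "Measurable.pred SS (win L d)"
  unfolding win_def by measurable

lemma win_Suc: "win (Suc L) d \<omega> \<longleftrightarrow> shd \<omega> < d \<and> win L d (stl \<omega>)"
  unfolding win_def by (auto simp: less_Suc_eq_0_disj)

lemma emeasure_win:
  assumes "0 \<le> d" "d \<le> 1" and [measurable]: "Y \<in> sets SS"
  shows "emeasure SS {\<omega>. win L d \<omega> \<and> sdrop L \<omega> \<in> Y} = ennreal (d ^ L) * emeasure SS Y"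
proof (induction L)
  case 0 then show ?case by (simp add: win_def)
next
  case (Suc L)
  have m: "{\<omega>. win L d \<omega> \<and> sdrop L \<omega> \<in> Y} \<in> sets SS"
  proof -
    have "{\<omega>\<in>space SS. win L d \<omega> \<and> sdrop L \<omega> \<in> Y} \<in> sets SS" by measurable
    then show ?thesis by simp
  qed
  have "{\<omega>. win (Suc L) d \<omega> \<and> sdrop (Suc L) \<omega> \<in> Y} =
        {\<omega>. shd \<omega> \<in> {x. x < d} \<and> stl \<omega> \<in> {\<omega>. win L d \<omega> \<and> sdrop L \<omega> \<in> Y}}"
    by (auto simp: win_Suc)
  then have "emeasure SS {\<omega>. win (Suc L) d \<omega> \<and> sdrop (Suc L) \<omega> \<in> Y} =
      emeasure UU {x. x < d} * emeasure SS {\<omega>. win L d \<omega> \<and> sdrop L \<omega> \<in> Y}"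
    using emeasure_SS_split[OF _ m, of "{x. x < d}"] by (simp only:) simp
  also have "\<dots> = ennreal d * (ennreal (d ^ L) * emeasure SS Y)"
    using Suc assms by (simp add: emeasure_UU_less)
  finally show ?case using assms by (simp add: ennreal_mult' mult.assoc)
qed

definition Wset :: "nat \<Rightarrow> real \<Rightarrow> real stream set" where
  "Wset L d = {\<omega>. \<forall>k. \<not> win L d (sdrop (k * L) \<omega>)}"

lemma Wset_measurable[measurable]: "Wset L d \<in> sets SS"
proof -
  have "{\<omega>\<in>space SS. \<forall>k. \<not> win L d (sdrop (k * L) \<omega>)} \<in> sets SS" by measurable
  then show ?thesis by (simp add: Wset_def)
qed

lemma Wset_unfold: "\<omega> \<in> Wset L d \<longleftrightarrow> \<not> win L d \<omega> \<and> sdrop L \<omega> \<in> Wset L d"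
proof -
  have "(\<forall>k. \<not> win L d (sdrop (k * L) \<omega>)) \<longleftrightarrow>
        \<not> win L d (sdrop (0 * L) \<omega>) \<and> (\<forall>k. \<not> win L d (sdrop (Suc k * L) \<omega>))"
    by (metis not0_implies_Suc)
  also have "(\<lambda>k. sdrop (Suc k * L) \<omega>) = (\<lambda>k. sdrop (k * L) (sdrop L \<omega>))"
    by (auto simp: sdrop_add add.commute)
  finally show ?thesis by (simp add: Wset_def)
qed

lemma emeasure_Wset:
  assumes "0 < d" "d \<le> 1"
  shows "emeasure SS (Wset L d) = 0"
proof -
  interpret S: prob_space SS by (rule prob_space_SS)
  let ?e = "S.prob (Wset L d)"
  let ?A1 = "{\<omega>. \<not> win L d \<omega> \<and> sdrop L \<omega> \<in> Wset L d}"
  let ?A2 = "{\<omega>. win L d \<omega> \<and> sdrop L \<omega> \<in> Wset L d}"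
  let ?A = "{\<omega>. sdrop L \<omega> \<in> Wset L d}"
  have m1: "?A1 \<in> sets SS"
  proof -
    have "{\<omega>\<in>space SS. \<not> win L d \<omega> \<and> sdrop L \<omega> \<in> Wset L d} \<in> sets SS" by measurable
    then show ?thesis by simp
  qed
  have m2: "?A2 \<in> sets SS"
  proof -
    have "{\<omega>\<in>space SS. win L d \<omega> \<and> sdrop L \<omega> \<in> Wset L d} \<in> sets SS" by measurable
    then show ?thesis by simp
  qed
  have A: "?A = ?A1 \<union> ?A2" by auto
  have "S.prob ?A = ?e"
    using emeasure_SS_sdrop[OF Wset_measurable, of L] by (simp add: S.emeasure_eq_measure)
  moreover have "S.prob ?A = S.prob ?A1 + S.prob ?A2"
    unfolding A using m1 m2 by (intro S.finite_measure_Union) auto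
  moreover have "S.prob ?A2 = d ^ L * ?e"
  proof -
    have "emeasure SS ?A2 = ennreal (d ^ L) * emeasure SS (Wset L d)"
      using emeasure_win[OF _ assms(2) Wset_measurable, of L] assms by simp
    then have "ennreal (S.prob ?A2) = ennreal (d ^ L) * ennreal ?e"
      by (simp only: S.emeasure_eq_measure)
    also have "\<dots> = ennreal (d ^ L * ?e)"
      using assms by (simp add: ennreal_mult)
    finally show ?thesis using assms by (subst (asm) ennreal_inj) auto
  qed
  moreover have "?e \<le> S.prob ?A1"
  proof -
    have "Wset L d \<subseteq> ?A1" using Wset_unfold[of _ L d] by blast
    then show ?thesis using m1 by (rule S.finite_measure_mono)
  qed
  ultimately have "d ^ L * ?e \<le> 0" by linarith
  moreover have "0 < d ^ L" using assms by simp
  ultimately have "?e = 0" using measure_nonneg[of SS "Wset L d"]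
    by (metis mult_le_0_iff not_less order.antisym)
  then show ?thesis by (simp add: S.emeasure_eq_measure)
qed

definition Zset :: "nat \<Rightarrow> real \<Rightarrow> real stream set" where
  "Zset L d = {\<omega>. \<forall>j. \<exists>k\<ge>j. win L d (sdrop (k * L) \<omega>)}"

lemma AE_Zset:
  assumes "0 < d" "d \<le> 1"
  shows "AE \<omega> in SS. \<omega> \<in> Zset L d"
proof -
  have null: "{\<omega>. sdrop (j * L) \<omega> \<in> Wset L d} \<in> null_sets SS" for j
  proof -
    have "{\<omega>\<in>space SS. sdrop (j * L) \<omega> \<in> Wset L d} \<in> sets SS" by measurable
    then show ?thesis
      using emeasure_SS_sdrop[OF Wset_measurable, of "j * L" L d] emeasure_Wset[OF assms, of L]
      by (simp add: null_sets_def)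
  qed
  have "AE \<omega> in SS. \<forall>j. sdrop (j * L) \<omega> \<notin> Wset L d"
    unfolding AE_all_countable
  proof
    fix j show "AE \<omega> in SS. sdrop (j * L) \<omega> \<notin> Wset L d"
      using null[of j] by (rule AE_I') auto
  qed
  then show ?thesis
  proof (rule eventually_mono)
    fix \<omega> assume h: "\<forall>j. sdrop (j * L) \<omega> \<notin> Wset L d"
    show "\<omega> \<in> Zset L d"
      unfolding Zset_def
    proof (intro CollectI allI)
      fix j
      from h have "sdrop (j * L) \<omega> \<notin> Wset L d" by blast
      then obtain k where "win L d (sdrop (k * L) (sdrop (j * L) \<omega>))"
        by (auto simp: Wset_def)
      then have "win L d (sdrop ((k + j) * L) \<omega>)" by (simp add: sdrop_add algebra_simps)
      then show "\<exists>k\<ge>j. win L d (sdrop (k * L) \<omega>)" by (intro exI[of _ "k + j"]) auto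
    qed
  qed
qed

lemma Zset_measurable[measurable]: "Zset L d \<in> sets SS"
proof -
  have "{\<omega>\<in>space SS. \<forall>j. \<exists>k\<ge>j. win L d (sdrop (k * L) \<omega>)} \<in> sets SS" by measurable
  then show ?thesis by (simp add: Zset_def)
qed

lemma measure_win_Zset:
  assumes "0 < d" "d \<le> 1"
  shows "measure SS ({\<omega>. win L d \<omega>} \<inter> Zset L d) = d ^ L"
proof -
  interpret S: prob_space SS by (rule prob_space_SS)
  have mw: "{\<omega>. win L d \<omega>} \<in> sets SS"
  proof -
    have "{\<omega>\<in>space SS. win L d \<omega>} \<in> sets SS" by measurable
    then show ?thesis by simp
  qed
  have "emeasure SS {\<omega>. win L d \<omega>} = ennreal (d ^ L)"
  proof -
    have "UNIV \<in> sets SS" using sets.top[of SS] by simp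
    then show ?thesis using emeasure_win[of d UNIV L] assms S.emeasure_space_1 by simp
  qed
  moreover have "emeasure SS ({\<omega>. win L d \<omega>} \<inter> Zset L d) = emeasure SS {\<omega>. win L d \<omega>}"
    using AE_Zset[OF assms, of L] mw
    by (intro emeasure_eq_AE) auto
  ultimately show ?thesis using assms by (simp add: S.emeasure_eq_measure)
qed

definition gs :: "('v list \<Rightarrow> 'v pmf) \<Rightarrow> ('v list \<Rightarrow> 'v) \<Rightarrow> 'v list \<Rightarrow> real \<Rightarrow> 'v" where
  "gs stp pref h x = samp (stp h) (pref h) x"

lemma gs_fun: "gs stp pref h = samp (stp h) (pref h)"
  by (rule ext) (simp add: gs_def)

primcorec grun :: "('v list \<Rightarrow> real \<Rightarrow> 'v) \<Rightarrow> 'v list \<Rightarrow> real stream \<Rightarrow> 'v stream" where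
  "grun g h xs = g h (shd xs) ## grun g (h @ [g h (shd xs)]) (stl xs)"

lemma grun_Stream: "grun g h (x ## xs) = g h x ## grun g (h @ [g h x]) xs"
  by (subst grun.ctr) simp

lemma gs_measurable_I:
  "(\<lambda>xs. gs stp pref h (shd xs)) \<in> SS \<rightarrow>\<^sub>M count_space (set_pmf (stp h))"
proof -
  have "(\<lambda>xs. gs stp pref h (shd xs)) \<in> SS \<rightarrow>\<^sub>M restrict_space (count_space UNIV) (set_pmf (stp h))"
    unfolding gs_def by (intro measurable_restrict_space2) (auto simp: samp_in)
  then show ?thesis by (simp add: restrict_count_space)
qed

lemma grun_snth_measurable:
  "(\<lambda>xs. grun (gs stp pref) h xs !! n) \<in> SS \<rightarrow>\<^sub>M count_space UNIV"
proof (induction n arbitrary: h)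
  case 0
  show ?case unfolding gs_def by simp
next
  case (Suc n)
  have eq: "(\<lambda>xs. grun (gs stp pref) h xs !! Suc n) =
     (\<lambda>xs. (\<lambda>w xs. grun (gs stp pref) (h @ [w]) (stl xs) !! n) (gs stp pref h (shd xs)) xs)"
    by simp
  show ?case unfolding eq
  proof (rule measurable_compose_countable'[OF _ gs_measurable_I])
    fix w
    show "(\<lambda>xs. grun (gs stp pref) (h @ [w]) (stl xs) !! n) \<in> SS \<rightarrow>\<^sub>M count_space UNIV"
      using measurable_compose[OF measurable_stl Suc.IH[of "h @ [w]"]] by simp
  qed (simp add: countable_set_pmf)
qed

lemma grun_measurable:
  "grun (gs stp pref) h \<in> SS \<rightarrow>\<^sub>M stream_space (count_space UNIV)"
  by (rule measurable_stream_space2) (rule grun_snth_measurable)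

definition Qg :: "(('s, 'u) gvert list \<Rightarrow> ('s, 'u) gvert pmf) \<Rightarrow> (('s, 'u) gvert list \<Rightarrow> ('s, 'u) gvert)
   \<Rightarrow> ('s, 'u) gvert list \<Rightarrow> ('s, 'u) gvert stream measure" where
  "Qg stp pref h = distr SS gruns (grun (gs stp pref) h)"

lemma prob_space_Qg: "prob_space (Qg stp pref h)"
  unfolding Qg_def
  by (rule prob_space.prob_space_distr[OF prob_space_SS grun_measurable])

lemma sets_Qg[simp]: "sets (Qg stp pref h) = sets gruns"
  by (simp add: Qg_def)

lemma space_Qg[simp]: "space (Qg stp pref h) = space gruns"
  using sets_eq_imp_space_eq[OF sets_Qg] .

lemma Qg_unfold:
  "Qg stp pref h = measure_pmf (stp h) \<bind> (\<lambda>w. distr (Qg stp pref (h @ [w])) gruns (\<lambda>\<omega>. w ## \<omega>))"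
  (is "_ = bind _ ?G")
proof (rule measure_eqI)
  have Gm: "?G \<in> measure_pmf (stp h) \<rightarrow>\<^sub>M subprob_algebra gruns"
  proof -
    have "prob_space (?G w)" for w
    proof (rule prob_space.prob_space_distr[OF prob_space_Qg])
      show "(\<lambda>\<omega>. w ## \<omega>) \<in> Qg stp pref (h @ [w]) \<rightarrow>\<^sub>M gruns"
        by (subst measurable_cong_sets[OF sets_Qg refl]) measurable
    qed
    then have "?G \<in> count_space UNIV \<rightarrow>\<^sub>M subprob_algebra gruns"
      by (auto simp: space_subprob_algebra prob_space_imp_subprob_space)
    then show ?thesis by (subst measurable_cong_sets[OF sets_measure_pmf_count_space refl])
  qed
  show "sets (Qg stp pref h) = sets (measure_pmf (stp h) \<bind> ?G)"
    by (subst sets_bind) (auto simp: sets_Qg)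
  fix A assume "A \<in> sets (Qg stp pref h)"
  then have A[measurable]: "A \<in> sets gruns" by simp
  let ?g = "gs stp pref"
  let ?F = "\<lambda>w. emeasure (?G w) A"
  have Fw: "?F w = emeasure SS {x. ?g h t ## grun ?g (h @ [?g h t]) x \<in> A}" if "w = ?g h t" for w t
  proof -
    have "?F w = emeasure (Qg stp pref (h @ [w])) ((\<lambda>\<omega>. w ## \<omega>) -` A \<inter> space (Qg stp pref (h @ [w])))"
      by (rule emeasure_distr[OF _ A]) (subst measurable_cong_sets[OF sets_Qg refl], measurable)
    also have "\<dots> = emeasure SS (grun ?g (h @ [w]) -` ((\<lambda>\<omega>. w ## \<omega>) -` A \<inter> space gruns) \<inter> space SS)"
    proof -
      have "(\<lambda>\<omega>. w ## \<omega>) -` A \<inter> space gruns \<in> sets gruns"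
        using A by (rule measurable_sets[rotated]) measurable
      then show ?thesis
        unfolding space_Qg unfolding Qg_def by (rule emeasure_distr[OF grun_measurable])
    qed
    finally show ?thesis using that by (simp add: space_stream_space vimage_def)
  qed
  have mA: "grun ?g h -` A \<inter> space SS \<in> sets SS"
    using grun_measurable A by (rule measurable_sets)
  have "emeasure (Qg stp pref h) A = emeasure SS (grun ?g h -` A \<inter> space SS)"
    unfolding Qg_def by (rule emeasure_distr[OF grun_measurable A])
  also have "\<dots> = (\<integral>\<^sup>+t. emeasure SS {x\<in>space SS. t ## x \<in> grun ?g h -` A \<inter> space SS} \<partial>UU)"
    using mA by (rule prob_space.emeasure_stream_space[OF prob_space_UU])
  also have "\<dots> = (\<integral>\<^sup>+t. ?F (?g h t) \<partial>UU)"
    by (intro nn_integral_cong) (simp add: Fw grun_Stream vimage_def)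
  also have "\<dots> = (\<integral>\<^sup>+w. ?F w \<partial>distr UU (count_space UNIV) (?g h))"
    by (subst nn_integral_distr) (auto simp: gs_fun)
  also have "\<dots> = (\<integral>\<^sup>+w. ?F w \<partial>measure_pmf (stp h))"
    by (simp add: gs_fun distr_samp)
  also have "\<dots> = emeasure (measure_pmf (stp h) \<bind> ?G) A"
    by (rule emeasure_bind[OF _ Gm A, symmetric]) simp
  finally show "emeasure (Qg stp pref h) A = emeasure (measure_pmf (stp h) \<bind> ?G) A" .
qed

lemma hist_Qg: "is_hist_measure stp (Qg stp pref)"
  unfolding is_hist_measure_def using prob_space_Qg Qg_unfold by auto

locale setting =
  fixes T :: "'s::polish_space \<Rightarrow> 'u::finite \<Rightarrow> 's measure"
    and l :: nat and B :: "nat \<Rightarrow> 's set"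
    and Sh :: "'s set set"
    and Fo Fu :: "'s set \<Rightarrow> 'u \<Rightarrow> 's set set"
    and \<sigma> :: "'s set \<Rightarrow> 'u"
    and c :: "'s set"
  assumes CMP: "is_CMP T"
    and PP: "is_priority_partition l B"
    and ABS: "is_abstraction l B Sh"
    and VF: "valid_F T Sh Fo Fu"
    and cSh: "c \<in> Sh"
begin

definition pr :: "'s set \<Rightarrow> nat" where
  "pr d = (THE i. i \<in> {1..l} \<and> d \<subseteq> B i)"

definition Erel :: "'s set set \<Rightarrow> ('s set \<times> 's set) set" where
  "Erel C = {(d, d'). d \<in> Sh \<and> d' \<in> Fo d (\<sigma> d) \<and> (d \<in> C \<longrightarrow> d' \<in> C)}"

definition trap :: "'s set set \<Rightarrow> 's set \<Rightarrow> bool" where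
  "trap C m \<longleftrightarrow> C \<subseteq> Sh \<and> m \<in> C \<and> (\<forall>d\<in>C. Fu d (\<sigma> d) \<subseteq> C) \<and>
     (\<forall>d\<in>C. \<exists>d'\<in>C. d' \<in> Fo d (\<sigma> d)) \<and> odd (pr m) \<and> (\<forall>d\<in>C. pr d \<le> pr m) \<and>
     (\<forall>d\<in>C. (d, m) \<in> (Erel C)\<^sup>*) \<and> (c, m) \<in> (Erel C)\<^sup>*"

lemma finSh: "finite Sh" using ABS by (simp add: is_abstraction_def)
lemma Sh_ne: "d \<in> Sh \<Longrightarrow> d \<noteq> {}" using ABS by (simp add: is_abstraction_def)
lemma Sh_borel: "d \<in> Sh \<Longrightarrow> d \<in> sets borel" using ABS by (simp add: is_abstraction_def)
lemma Sh_disj: "d \<in> Sh \<Longrightarrow> d' \<in> Sh \<Longrightarrow> d \<noteq> d' \<Longrightarrow> d \<inter> d' = {}"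
  using ABS by (simp add: is_abstraction_def)
lemma Sh_cover: "\<exists>d\<in>Sh. s \<in> d" using ABS by (auto simp: is_abstraction_def)
lemma Sh_prio: "d \<in> Sh \<Longrightarrow> \<exists>i\<in>{1..l}. d \<subseteq> B i" using ABS by (simp add: is_abstraction_def)

lemma B_disj: "i \<in> {1..l} \<Longrightarrow> j \<in> {1..l} \<Longrightarrow> x \<in> B i \<Longrightarrow> x \<in> B j \<Longrightarrow> i = j"
  using PP unfolding is_priority_partition_def by blast

lemma B_borel: "i \<in> {1..l} \<Longrightarrow> B i \<in> sets borel"
  using PP unfolding is_priority_partition_def by blast

lemma cell_of_eq: "d \<in> Sh \<Longrightarrow> s \<in> d \<Longrightarrow> cell_of Sh s = d"
  unfolding cell_of_def using Sh_disj by (intro the_equality) blast+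

lemma cell_of_in: "cell_of Sh s \<in> Sh" "s \<in> cell_of Sh s"
  using Sh_cover[of s] cell_of_eq by auto

lemma pr_prop: "d \<in> Sh \<Longrightarrow> pr d \<in> {1..l} \<and> d \<subseteq> B (pr d)"
proof -
  assume d: "d \<in> Sh"
  then obtain i where i: "i \<in> {1..l}" "d \<subseteq> B i" using Sh_prio by blast
  obtain x where "x \<in> d" using Sh_ne[OF d] by auto
  have "pr d = i"
    unfolding pr_def
  proof (rule the_equality)
    fix j assume "j \<in> {1..l} \<and> d \<subseteq> B j"
    then show "j = i" using i \<open>x \<in> d\<close> B_disj by blast
  qed (use i in auto)
  with i show ?thesis by simp
qed

lemma pr_unique: "d \<in> Sh \<Longrightarrow> j \<in> {1..l} \<Longrightarrow> d \<subseteq> B j \<Longrightarrow> j = pr d"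
proof -
  assume d: "d \<in> Sh" and j: "j \<in> {1..l}" "d \<subseteq> B j"
  obtain x where "x \<in> d" using Sh_ne[OF d] by auto
  then show ?thesis using pr_prop[OF d] j B_disj by blast
qed

lemma T_prob: "prob_space (T s u)" and T_sets: "sets (T s u) = sets borel"
  using CMP by (auto simp: is_CMP_def)

lemma Fo_Sh: "d \<in> Sh \<Longrightarrow> Fo d u \<subseteq> Sh" and Fu_Sh: "d \<in> Sh \<Longrightarrow> Fu d u \<subseteq> Sh"
  using VF by (auto simp: valid_F_def)

lemma Fo_pos: "d \<in> Sh \<Longrightarrow> d' \<in> Sh \<Longrightarrow> s \<in> d \<Longrightarrow> measure (T s u) d' > 0 \<Longrightarrow> d' \<in> Fo d u"
  using VF unfolding valid_F_def by blast

lemma Fu_eps: "d \<in> Sh \<Longrightarrow> d' \<in> Fu d u \<Longrightarrow> \<exists>\<epsilon>>0. \<forall>s\<in>d. measure (T s u) d' \<ge> \<epsilon>"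
  using VF unfolding valid_F_def by blast

lemma Fu_Fo: "d \<in> Sh \<Longrightarrow> Fu d u \<subseteq> Fo d u"
proof
  fix d' assume d: "d \<in> Sh" and d': "d' \<in> Fu d u"
  obtain \<epsilon> where e: "\<epsilon> > 0" "\<forall>s\<in>d. measure (T s u) d' \<ge> \<epsilon>" using Fu_eps[OF d d'] by blast
  obtain s where "s \<in> d" using Sh_ne[OF d] by auto
  have "d' \<in> Sh" using Fu_Sh[OF d] d' by blast
  then show "d' \<in> Fo d u" using e Fo_pos[OF d _ \<open>s \<in> d\<close>] \<open>s \<in> d\<close> by force
qed

lemma Fo_ne: "d \<in> Sh \<Longrightarrow> Fo d u \<noteq> {}"
proof
  assume d: "d \<in> Sh" and e: "Fo d u = {}"
  obtain s where s: "s \<in> d" using Sh_ne[OF d] by auto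
  interpret prob_space "T s u" by (rule T_prob)
  have z: "measure (T s u) d' = 0" if "d' \<in> Sh" for d'
  proof -
    have "\<not> 0 < measure (T s u) d'" using Fo_pos[OF d that s, of u] e by blast
    then show ?thesis using measure_nonneg[of "T s u" d'] by linarith
  qed
  have "1 = measure (T s u) (\<Union>Sh)"
  proof -
    have "\<Union>Sh = UNIV" using Sh_cover by auto
    moreover have "space (T s u) = UNIV" using sets_eq_imp_space_eq[OF T_sets[of s u]] by simp
    ultimately show ?thesis using prob_space by simp
  qed
  also have "\<dots> \<le> (\<Sum>d'\<in>Sh. measure (T s u) d')"
    using finSh Sh_borel by (intro measure_Union_le) (auto simp: T_sets)
  also have "\<dots> = 0" using z by simp
  finally show False by simp
qed


lemma INFM_Suc_shift: "(INFM n. P (Suc n)) \<Longrightarrow> (INFM n::nat. P n)"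
  unfolding INFM_nat
proof
  fix m assume h: "\<forall>m. \<exists>n>m. P (Suc n)"
  then obtain n where "n > m" "P (Suc n)" by blast
  then show "\<exists>n>m. P n" by (intro exI[of _ "Suc n"]) auto
qed

lemma INFM_ge: "(INFM n. P n) \<Longrightarrow> \<exists>n\<ge>(m::nat). P n"
  unfolding INFM_nat
proof -
  assume "\<forall>m. \<exists>n>m. P n"
  then obtain n where "n > m" "P n" by blast
  then show "\<exists>n\<ge>m. P n" by (intro exI[of _ n]) auto
qed

lemma trap_from_path:
  assumes a: "\<forall>n. cell_of Sh (\<omega> !! Suc n) \<in> Fo (cell_of Sh (\<omega> !! n)) (\<sigma> (cell_of Sh (\<omega> !! n)))"
    and b: "\<forall>d\<in>Sh. \<forall>d'\<in>Fu d (\<sigma> d). (INFM n. \<omega> !! n \<in> d) \<longrightarrow> (INFM n. \<omega> !! n \<in> d \<and> \<omega> !! Suc n \<in> d')"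
    and c0: "\<omega> !! 0 \<in> c" and np: "\<not> parity l B \<omega>"
  shows "\<exists>C m. trap C m"
proof -
  define cl where "cl n = cell_of Sh (\<omega> !! n)" for n
  have cl_Sh: "cl n \<in> Sh" and cl_in: "\<omega> !! n \<in> cl n" for n
    using cell_of_in unfolding cl_def by auto
  have in_iff: "\<omega> !! n \<in> d \<longleftrightarrow> cl n = d" if "d \<in> Sh" for n d
    using cell_of_eq[OF that] cl_in cl_def by auto
  have a': "cl (Suc n) \<in> Fo (cl n) (\<sigma> (cl n))" for n using a unfolding cl_def by blast
  define I where "I = {d\<in>Sh. INFM n. cl n = d}"
  have I_Sh: "I \<subseteq> Sh" by (auto simp: I_def)
  have finI: "finite I" using finSh I_Sh by (rule finite_subset[rotated])
  have "MOST n. \<forall>d\<in>Sh - I. cl n \<noteq> d"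
    using finSh by (intro eventually_ball_finite) (auto simp: I_def)
  then obtain N0 where N0: "\<forall>n\<ge>N0. \<forall>d\<in>Sh - I. cl n \<noteq> d" by (auto simp: MOST_nat_le)
  have clI: "n \<ge> N0 \<Longrightarrow> cl n \<in> I" for n using N0 cl_Sh by blast
  have Ine: "I \<noteq> {}" using clI[of N0] by auto
  have "Max (pr ` I) \<in> pr ` I" using finI Ine by (intro Max_in) auto
  then obtain m where m: "m \<in> I" "pr m = Max (pr ` I)" by auto
  have prle: "\<forall>d\<in>I. pr d \<le> pr m" using m finI by auto
  have mSh: "m \<in> Sh" using m I_Sh by auto
  have infm: "INFM n. cl n = m" using m by (auto simp: I_def)
  have odd: "odd (pr m)"
  proof (rule ccontr)
    assume ev: "\<not> odd (pr m)"
    have "parity l B \<omega>"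
      unfolding parity_def
    proof (intro ballI impI)
      fix i assume i: "i \<in> {1..l}" "odd i" and ii: "INFM n. \<omega> !! n \<in> B i"
      obtain n where n: "n \<ge> N0" "\<omega> !! n \<in> B i" using INFM_ge[OF ii] by blast
      have "cl n \<in> I" using clI n by simp
      moreover have "i = pr (cl n)"
        using pr_prop[OF cl_Sh[of n]] cl_in[of n] n i B_disj by blast
      ultimately have "i \<le> pr m" using prle by auto
      moreover have "i \<noteq> pr m" using ev i by auto
      ultimately have "i < pr m" by simp
      moreover have "INFM n. \<omega> !! n \<in> B (pr m)"
        using infm pr_prop[OF mSh] cl_in by (elim INFM_mono) auto
      ultimately show "\<exists>j\<in>{1..l}. even j \<and> i < j \<and> (INFM n. \<omega> !! n \<in> B j)"
        using ev pr_prop[OF mSh] by blast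
    qed
    with np show False by simp
  qed
  have FuI: "\<forall>d\<in>I. Fu d (\<sigma> d) \<subseteq> I"
  proof (intro ballI subsetI)
    fix d d' assume d: "d \<in> I" and d': "d' \<in> Fu d (\<sigma> d)"
    have dSh: "d \<in> Sh" using d I_Sh by auto
    have d'Sh: "d' \<in> Sh" using Fu_Sh[OF dSh] d' by auto
    have "INFM n. \<omega> !! n \<in> d" using d in_iff[OF dSh] by (auto simp: I_def)
    then have "INFM n. \<omega> !! n \<in> d \<and> \<omega> !! Suc n \<in> d'" using b dSh d' by blast
    then have "INFM n. cl (Suc n) = d'"
    proof (elim INFM_mono)
      fix n assume "\<omega> !! n \<in> d \<and> \<omega> !! Suc n \<in> d'"
      then show "cl (Suc n) = d'" using in_iff[OF d'Sh, of "Suc n"] by blast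
    qed
    then have "INFM n. cl n = d'" by (rule INFM_Suc_shift)
    then show "d' \<in> I" using d'Sh by (auto simp: I_def)
  qed
  have FoI: "\<forall>d\<in>I. \<exists>d'\<in>I. d' \<in> Fo d (\<sigma> d)"
  proof
    fix d assume d: "d \<in> I"
    then obtain n where n: "n \<ge> N0" "cl n = d" using INFM_ge[of "\<lambda>n. cl n = d" N0] by (auto simp: I_def)
    then show "\<exists>d'\<in>I. d' \<in> Fo d (\<sigma> d)" using clI[of "Suc n"] a'[of n] by auto
  qed
  have reach: "(cl n, cl (n + k)) \<in> (Erel I)\<^sup>*" if "n \<ge> N0" for n k
  proof (induction k)
    case 0 then show ?case by simp
  next
    case (Suc k)
    have "(cl (n + k), cl (n + Suc k)) \<in> Erel I"
      using a'[of "n + k"] cl_Sh clI[of "n + Suc k"] that by (auto simp: Erel_def)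
    with Suc show ?case by (rule rtrancl_into_rtrancl)
  qed
  have toM: "\<forall>d\<in>I. (d, m) \<in> (Erel I)\<^sup>*"
  proof
    fix d assume d: "d \<in> I"
    then obtain n where n: "n \<ge> N0" "cl n = d" using INFM_ge[of "\<lambda>n. cl n = d" N0] by (auto simp: I_def)
    obtain n' where n': "n' \<ge> n" "cl n' = m" using INFM_ge[OF infm, of n] by blast
    have "(cl n, cl (n + (n' - n))) \<in> (Erel I)\<^sup>*" using reach n by blast
    then show "(d, m) \<in> (Erel I)\<^sup>*" using n n' by simp
  qed
  have ex: "\<exists>k. cl k \<in> I" using clI by blast
  define k0 where "k0 = (LEAST k. cl k \<in> I)"
  have k0: "cl k0 \<in> I" using LeastI_ex[OF ex] by (simp add: k0_def)
  have bef: "j < k0 \<Longrightarrow> cl j \<notin> I" for j using not_less_Least[of j "\<lambda>k. cl k \<in> I"] by (simp add: k0_def)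
  have pre: "j \<le> k0 \<Longrightarrow> (cl 0, cl j) \<in> (Erel I)\<^sup>*" for j
  proof (induction j)
    case 0 then show ?case by simp
  next
    case (Suc j)
    then have "(cl j, cl (Suc j)) \<in> Erel I" using a'[of j] cl_Sh bef[of j] by (auto simp: Erel_def)
    with Suc show ?case by (meson Suc_leD rtrancl_into_rtrancl)
  qed
  have "cl 0 = c" using c0 in_iff[OF cSh, of 0] by blast
  then have "(c, m) \<in> (Erel I)\<^sup>*" using pre[of k0] toM k0 by (metis order_refl rtrancl_trans)
  then have "trap I m" unfolding trap_def
    using I_Sh m(1) FuI FoI odd prle toM by blast
  then show ?thesis by blast
qed

end

lemma inf_pred:
  assumes [measurable]: "A \<in> sets M"
  shows "Measurable.pred (stream_space M) (\<lambda>\<omega>. INFM n. \<omega> !! n \<in> A)"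
  unfolding INFM_nat by measurable

lemma parity_pred:
  assumes "\<And>i. i \<in> {1..l} \<Longrightarrow> C i \<in> sets M"
  shows "Measurable.pred (stream_space M) (parity l C)"
proof -
  have eq: "parity l C = (\<lambda>\<omega>. \<forall>i\<in>{1..l}. (\<lambda>\<omega>. odd i \<longrightarrow> (INFM n. \<omega> !! n \<in> C i) \<longrightarrow>
        (\<exists>j\<in>{1..l}. (\<lambda>\<omega>. even j \<and> i < j \<and> (INFM n. \<omega> !! n \<in> C j)) \<omega>)) \<omega>)"
    by (rule ext) (simp add: parity_def)
  show ?thesis unfolding eq
  proof (intro pred_intros_countable_bounded(3) pred_intros_logic(4))
    fix i assume i: "i \<in> {1..l}"
    show "Measurable.pred (stream_space M) (\<lambda>\<omega>. odd i)" by simp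
    show "Measurable.pred (stream_space M) (\<lambda>\<omega>. INFM n. \<omega> !! n \<in> C i)" using assms[OF i] by (rule inf_pred)
    show "Measurable.pred (stream_space M) (\<lambda>x. \<exists>j\<in>{1..l}. even j \<and> i < j \<and> (INFM n. x !! n \<in> C j))"
    proof (intro pred_intros_countable_bounded(4))
      fix j assume j: "j \<in> {1..l}"
      have [measurable]: "Measurable.pred (stream_space M) (\<lambda>\<omega>. INFM n. \<omega> !! n \<in> C j)" using assms[OF j] by (rule inf_pred)
      show "Measurable.pred (stream_space M) (\<lambda>x. even j \<and> i < j \<and> (INFM n. x !! n \<in> C j))" by measurable
    qed
  qed
qed

lemma parity_sets:
  assumes "\<And>i. i \<in> {1..l} \<Longrightarrow> C i \<in> sets M" "space M = UNIV"
  shows "{\<omega>. parity l C \<omega>} \<in> sets (stream_space M)"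
proof -
  have "{\<omega>\<in>space (stream_space M). parity l C \<omega>} \<in> sets (stream_space M)"
    using parity_pred[OF assms(1)] by measurable
  then show ?thesis using assms(2) by (simp add: space_stream_space)
qed

fun Av :: "'s set \<Rightarrow> 's set \<Rightarrow> nat \<Rightarrow> nat \<Rightarrow> 's stream set" where
  "Av D D' k 0 = (if k = 0 then UNIV else {})"
| "Av D D' k (Suc N) = {\<omega>. (shd \<omega> \<in> D \<and> (k = 0 \<or> (shd (stl \<omega>) \<notin> D' \<and> stl \<omega> \<in> Av D D' (k - 1) N))) \<or>
        (shd \<omega> \<notin> D \<and> stl \<omega> \<in> Av D D' k N)}"

locale pathm =
  fixes K :: "'s::topological_space \<Rightarrow> 's measure" and P :: "'s \<Rightarrow> 's stream measure"
  assumes K_prob: "\<And>s. prob_space (K s)" and K_sets: "\<And>s. sets (K s) = sets borel"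
    and P_meas: "P \<in> borel \<rightarrow>\<^sub>M prob_algebra (stream_space borel)"
    and P_eq: "\<And>s. P s = K s \<bind> (\<lambda>t. distr (P t) (stream_space borel) (\<lambda>\<omega>. s ## \<omega>))"
begin

abbreviation SB :: "'s stream measure" where "SB \<equiv> stream_space borel"

lemma space_SB[simp]: "space SB = UNIV"
  by (simp add: space_stream_space)

lemma P_space: "P s \<in> space (prob_algebra SB)"
  using measurable_space[OF P_meas, of s] by simp

lemma P_prob: "prob_space (P s)" and sets_P[simp, measurable_cong]: "sets (P s) = sets SB"
  using P_space[of s] by (auto simp: space_prob_algebra)

lemma space_P[simp]: "space (P s) = UNIV"
  using sets_eq_imp_space_eq[OF sets_P[of s]] by simp

lemma P_em: "emeasure (P t) A = ennreal (measure (P t) A)"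
proof -
  interpret prob_space "P t" by (rule P_prob)
  show ?thesis by (rule emeasure_eq_measure)
qed

lemma space_K[simp]: "space (K s) = UNIV"
  using sets_eq_imp_space_eq[OF K_sets[of s]] by simp

lemma markov:
  assumes X: "X \<in> sets SB"
  shows "emeasure (P s) X = (\<integral>\<^sup>+t. emeasure (P t) {\<omega>. s ## \<omega> \<in> X} \<partial>K s)"
proof -
  have Gm: "(\<lambda>t. distr (P t) SB (\<lambda>\<omega>. s ## \<omega>)) \<in> K s \<rightarrow>\<^sub>M subprob_algebra SB"
  proof -
    have "(\<lambda>t. distr (P t) SB (\<lambda>\<omega>. s ## \<omega>)) \<in> borel \<rightarrow>\<^sub>M subprob_algebra SB"
      by (rule measurable_compose[OF measurable_prob_algebraD[OF P_meas] measurable_distr]) simp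
    then show ?thesis by (simp add: measurable_cong_sets[OF K_sets refl])
  qed
  have "emeasure (P s) X = emeasure (K s \<bind> (\<lambda>t. distr (P t) SB (\<lambda>\<omega>. s ## \<omega>))) X"
    by (subst P_eq) rule
  also have "\<dots> = (\<integral>\<^sup>+t. emeasure (distr (P t) SB (\<lambda>\<omega>. s ## \<omega>)) X \<partial>K s)"
    by (rule emeasure_bind[OF _ Gm X]) simp
  also have "\<dots> = (\<integral>\<^sup>+t. emeasure (P t) {\<omega>. s ## \<omega> \<in> X} \<partial>K s)"
  proof (intro nn_integral_cong)
    fix t
    have "(\<lambda>\<omega>. s ## \<omega>) \<in> P t \<rightarrow>\<^sub>M SB"
      by (subst measurable_cong_sets[OF sets_P refl]) simp
    then show "emeasure (distr (P t) SB (\<lambda>\<omega>. s ## \<omega>)) X = emeasure (P t) {\<omega>. s ## \<omega> \<in> X}"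
      using X by (subst emeasure_distr) (auto simp: vimage_def)
  qed
  finally show ?thesis .
qed

lemma markov_split:
  assumes [measurable]: "A \<in> sets borel" "Y \<in> sets SB"
  shows "emeasure (P s) {\<omega>. shd \<omega> \<in> A \<and> stl \<omega> \<in> Y} = indicator A s * (\<integral>\<^sup>+t. emeasure (P t) Y \<partial>K s)"
proof -
  have m: "{\<omega>. shd \<omega> \<in> A \<and> stl \<omega> \<in> Y} \<in> sets SB"
  proof -
    have "{\<omega>\<in>space SB. shd \<omega> \<in> A \<and> stl \<omega> \<in> Y} \<in> sets SB" by measurable
    then show ?thesis by simp
  qed
  have "emeasure (P s) {\<omega>. shd \<omega> \<in> A \<and> stl \<omega> \<in> Y} =
      (\<integral>\<^sup>+t. emeasure (P t) {\<omega>. s ## \<omega> \<in> {\<omega>. shd \<omega> \<in> A \<and> stl \<omega> \<in> Y}} \<partial>K s)"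
    using m by (rule markov)
  also have "\<dots> = (\<integral>\<^sup>+t. indicator A s * emeasure (P t) Y \<partial>K s)"
    by (intro nn_integral_cong) (auto split: split_indicator)
  also have "\<dots> = indicator A s * (\<integral>\<^sup>+t. emeasure (P t) Y \<partial>K s)"
  proof (rule nn_integral_cmult)
    show "(\<lambda>t. emeasure (P t) Y) \<in> borel_measurable (K s)"
    proof -
      have "(\<lambda>t. emeasure (P t) Y) \<in> borel_measurable borel"
        by (rule measurable_compose[OF measurable_prob_algebraD[OF P_meas] measurable_emeasure_subprob_algebra]) simp
      then show ?thesis by (simp add: measurable_cong_sets[OF K_sets refl])
    qed
  qed
  finally show ?thesis .
qed

lemma markov_stl:
  assumes [measurable]: "Y \<in> sets SB"
  shows "emeasure (P s) {\<omega>. stl \<omega> \<in> Y} = (\<integral>\<^sup>+t. emeasure (P t) Y \<partial>K s)"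
  using markov_split[of UNIV Y s] by simp

lemma markov_shd:
  assumes [measurable]: "A \<in> sets borel"
  shows "emeasure (P s) {\<omega>. shd \<omega> \<in> A} = indicator A s"
proof -
  have "emeasure (P s) {\<omega>. shd \<omega> \<in> A \<and> stl \<omega> \<in> UNIV} = indicator A s * (\<integral>\<^sup>+t. emeasure (P t) UNIV \<partial>K s)"
    by (rule markov_split) (auto intro: sets.top[of SB, simplified])
  also have "(\<integral>\<^sup>+t. emeasure (P t) UNIV \<partial>K s) = (\<integral>\<^sup>+t. 1 \<partial>K s)"
    using prob_space.emeasure_space_1[OF P_prob] by (intro nn_integral_cong) simp
  also have "\<dots> = 1"
    using prob_space.emeasure_space_1[OF K_prob[of s]] by simp
  finally show ?thesis by simp
qed

lemma null_shift:
  assumes [measurable]: "E \<in> sets SB" and E0: "\<And>t. emeasure (P t) E = 0"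
  shows "emeasure (P s) {\<omega>. sdrop m \<omega> \<in> E} = 0"
proof (induction m arbitrary: s)
  case 0 then show ?case using E0 by simp
next
  case (Suc m)
  have m: "{\<omega>. sdrop m \<omega> \<in> E} \<in> sets SB"
  proof -
    have "{\<omega>\<in>space SB. sdrop m \<omega> \<in> E} \<in> sets SB" by measurable
    then show ?thesis by simp
  qed
  have "{\<omega>. sdrop (Suc m) \<omega> \<in> E} = {\<omega>. stl \<omega> \<in> {\<omega>. sdrop m \<omega> \<in> E}}" by simp
  then show ?case using markov_stl[OF m, of s] Suc by simp
qed

lemma AE_step:
  assumes [measurable]: "D \<in> sets borel" "D' \<in> sets borel"
    and K0: "\<And>s. s \<in> D \<Longrightarrow> emeasure (K s) D' = 0"
  shows "AE \<omega> in P s. \<forall>n. \<not> (\<omega> !! n \<in> D \<and> \<omega> !! Suc n \<in> D')"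
proof -
  have z: "emeasure (P s) {\<omega>. \<omega> !! n \<in> D \<and> \<omega> !! Suc n \<in> D'} = 0" for n
  proof (induction n arbitrary: s)
    case 0
    have m: "{\<omega>. shd \<omega> \<in> D'} \<in> sets SB"
    proof -
      have "{\<omega>\<in>space SB. shd \<omega> \<in> D'} \<in> sets SB" by measurable
      then show ?thesis by simp
    qed
    have "{\<omega>. \<omega> !! 0 \<in> D \<and> \<omega> !! Suc 0 \<in> D'} = {\<omega>. shd \<omega> \<in> D \<and> stl \<omega> \<in> {\<omega>. shd \<omega> \<in> D'}}"
      by simp
    then have "emeasure (P s) {\<omega>. \<omega> !! 0 \<in> D \<and> \<omega> !! Suc 0 \<in> D'} =
        indicator D s * (\<integral>\<^sup>+t. emeasure (P t) {\<omega>. shd \<omega> \<in> D'} \<partial>K s)"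
      using markov_split[OF _ m, of D s] by simp
    also have "(\<integral>\<^sup>+t. emeasure (P t) {\<omega>. shd \<omega> \<in> D'} \<partial>K s) = (\<integral>\<^sup>+t. indicator D' t \<partial>K s)"
      by (intro nn_integral_cong) (simp add: markov_shd)
    also have "\<dots> = emeasure (K s) D'"
      by (subst nn_integral_indicator) (auto simp: K_sets)
    finally show ?case using K0[of s] by (auto split: split_indicator)
  next
    case (Suc n)
    have m: "{\<omega>. \<omega> !! n \<in> D \<and> \<omega> !! Suc n \<in> D'} \<in> sets SB"
    proof -
      have "{\<omega>\<in>space SB. \<omega> !! n \<in> D \<and> \<omega> !! Suc n \<in> D'} \<in> sets SB" by measurable
      then show ?thesis by simp
    qed
    have "{\<omega>. \<omega> !! Suc n \<in> D \<and> \<omega> !! Suc (Suc n) \<in> D'} = {\<omega>. stl \<omega> \<in> {\<omega>. \<omega> !! n \<in> D \<and> \<omega> !! Suc n \<in> D'}}"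
      by simp
    then show ?case using markov_stl[OF m, of s] Suc by simp
  qed
  show ?thesis
    unfolding AE_all_countable
  proof
    fix n
    have "{\<omega>\<in>space (P s). \<omega> !! n \<in> D \<and> \<omega> !! Suc n \<in> D'} \<in> null_sets (P s)"
    proof -
      have "{\<omega>\<in>space SB. \<omega> !! n \<in> D \<and> \<omega> !! Suc n \<in> D'} \<in> sets SB" by measurable
      then show ?thesis using z[of n] by (simp add: null_sets_def)
    qed
    then show "AE \<omega> in P s. \<not> (\<omega> !! n \<in> D \<and> \<omega> !! Suc n \<in> D')"
      by (rule AE_I') auto
  qed
qed


lemma Av_measurable[measurable]:
  assumes [measurable]: "D \<in> sets borel" "D' \<in> sets borel"
  shows "Av D D' k N \<in> sets SB"
proof (induction N arbitrary: k)
  case 0 then show ?case using sets.top[of SB] by simp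
next
  case (Suc N)
  note Suc[measurable]
  have "{\<omega>\<in>space SB. (shd \<omega> \<in> D \<and> (k = 0 \<or> (shd (stl \<omega>) \<notin> D' \<and> stl \<omega> \<in> Av D D' (k - 1) N))) \<or>
        (shd \<omega> \<notin> D \<and> stl \<omega> \<in> Av D D' k N)} \<in> sets SB"
    by measurable
  then show ?case by simp
qed

lemma Av_bound:
  assumes [measurable]: "D \<in> sets borel" "D' \<in> sets borel"
    and eps: "0 < \<epsilon>" "\<epsilon> \<le> 1" and Kb: "\<And>s. s \<in> D \<Longrightarrow> \<epsilon> \<le> measure (K s) D'"
  shows "emeasure (P t) (Av D D' k N) \<le> ennreal ((1 - \<epsilon>) ^ k)"
proof (induction N arbitrary: k t)
  case 0
  show ?case
  proof (cases "k = 0")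
    case True
    then show ?thesis using prob_space.emeasure_space_1[OF P_prob, of t] by simp
  next
    case False then show ?thesis by simp
  qed
next
  case (Suc N)
  interpret Kt: prob_space "K t" by (rule K_prob)
  have le1: "emeasure (P t) X \<le> 1" for X
    using prob_space.emeasure_le_1[OF P_prob] by simp
  have eq: "emeasure (P t) (Av D D' k (Suc N)) =
    (\<integral>\<^sup>+t'. emeasure (P t') {\<omega>. t ## \<omega> \<in> Av D D' k (Suc N)} \<partial>K t)"
    by (rule markov) (rule Av_measurable[OF assms(1,2)])
  show ?case
  proof (cases "t \<in> D")
    case False
    then have "(\<integral>\<^sup>+t'. emeasure (P t') {\<omega>. t ## \<omega> \<in> Av D D' k (Suc N)} \<partial>K t) =
       (\<integral>\<^sup>+t'. emeasure (P t') (Av D D' k N) \<partial>K t)" by simp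
    also have "\<dots> \<le> (\<integral>\<^sup>+t'. ennreal ((1 - \<epsilon>) ^ k) \<partial>K t)"
      by (intro nn_integral_mono Suc.IH)
    also have "\<dots> = ennreal ((1 - \<epsilon>) ^ k)"
      using Kt.emeasure_space_1 by simp
    finally show ?thesis using eq by simp
  next
    case True
    show ?thesis
    proof (cases "k = 0")
      case True then show ?thesis using le1 by simp
    next
      case False
      then obtain k' where k: "k = Suc k'" by (cases k) auto
      have "(\<integral>\<^sup>+t'. emeasure (P t') {\<omega>. t ## \<omega> \<in> Av D D' k (Suc N)} \<partial>K t) =
         (\<integral>\<^sup>+t'. emeasure (P t') {\<omega>. shd \<omega> \<notin> D' \<and> \<omega> \<in> Av D D' k' N} \<partial>K t)"
        using True k by simp
      also have "\<dots> \<le> (\<integral>\<^sup>+t'. ennreal ((1 - \<epsilon>) ^ k') * indicator (UNIV - D') t' \<partial>K t)"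
      proof (intro nn_integral_mono)
        fix t'
        show "emeasure (P t') {\<omega>. shd \<omega> \<notin> D' \<and> \<omega> \<in> Av D D' k' N} \<le>
              ennreal ((1 - \<epsilon>) ^ k') * indicator (UNIV - D') t'"
        proof (cases "t' \<in> D'")
          case True
          have m: "{\<omega>. shd \<omega> \<in> UNIV - D'} \<in> sets SB"
          proof -
            have "{\<omega>\<in>space SB. shd \<omega> \<in> UNIV - D'} \<in> sets SB" by measurable
            then show ?thesis by simp
          qed
          have "emeasure (P t') {\<omega>. shd \<omega> \<notin> D' \<and> \<omega> \<in> Av D D' k' N} \<le> emeasure (P t') {\<omega>. shd \<omega> \<in> UNIV - D'}"
            using m by (intro emeasure_mono) auto
          also have "\<dots> = 0" using True by (subst markov_shd) auto
          finally show ?thesis by simp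
        next
          case False
          have "emeasure (P t') {\<omega>. shd \<omega> \<notin> D' \<and> \<omega> \<in> Av D D' k' N} \<le> emeasure (P t') (Av D D' k' N)"
            by (intro emeasure_mono) auto
          also have "\<dots> \<le> ennreal ((1 - \<epsilon>) ^ k')" by (rule Suc.IH)
          finally show ?thesis using False by simp
        qed
      qed
      also have "\<dots> = ennreal ((1 - \<epsilon>) ^ k') * emeasure (K t) (UNIV - D')"
        by (subst nn_integral_cmult_indicator) (auto simp: K_sets)
      also have "emeasure (K t) (UNIV - D') = ennreal (1 - measure (K t) D')"
        using Kt.prob_compl[of D'] by (simp add: Kt.emeasure_eq_measure K_sets)
      also have "ennreal ((1 - \<epsilon>) ^ k') * ennreal (1 - measure (K t) D') \<le> ennreal ((1 - \<epsilon>) ^ k') * ennreal (1 - \<epsilon>)"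
        using Kb[OF True] by (intro mult_left_mono ennreal_leI) auto
      also have "\<dots> = ennreal ((1 - \<epsilon>) ^ k)"
        using eps k by (simp add: ennreal_mult'[symmetric] mult.commute)
      finally show ?thesis using eq by simp
    qed
  qed
qed

end

lemma Av_mono: "Av D D' k N \<subseteq> Av D D' k (Suc N)"
proof (induction N arbitrary: k)
  case 0 then show ?case by auto
next
  case (Suc N)
  have "\<And>k. Av D D' k N \<subseteq> Av D D' k (Suc N)" by (rule Suc.IH)
  then show ?case by fastforce
qed

definition cnt :: "'s set \<Rightarrow> nat \<Rightarrow> 's stream \<Rightarrow> nat" where
  "cnt D N \<omega> = (\<Sum>n<N. if \<omega> !! n \<in> D then 1 else 0)"

lemma cnt_Suc: "cnt D (Suc N) \<omega> = (if shd \<omega> \<in> D then 1 else 0) + cnt D N (stl \<omega>)"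
  unfolding cnt_def by (subst sum.lessThan_Suc_shift) simp

lemma in_Av:
  assumes "\<forall>n. \<not> (\<omega> !! n \<in> D \<and> \<omega> !! Suc n \<in> D')" "k \<le> cnt D N \<omega>"
  shows "\<omega> \<in> Av D D' k N"
  using assms
proof (induction N arbitrary: k \<omega>)
  case 0 then show ?case by (simp add: cnt_def)
next
  case (Suc N)
  have ng: "\<forall>n. \<not> (stl \<omega> !! n \<in> D \<and> stl \<omega> !! Suc n \<in> D')"
    using Suc.prems(1) by (metis snth.simps(2))
  show ?case
  proof (cases "shd \<omega> \<in> D")
    case True
    have "shd (stl \<omega>) \<notin> D'" using Suc.prems(1) True by (metis snth.simps)
    moreover have "k - 1 \<le> cnt D N (stl \<omega>)" using Suc.prems(2) True by (simp add: cnt_Suc)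
    ultimately show ?thesis using True Suc.IH[OF ng] by simp
  next
    case False
    then have "k \<le> cnt D N (stl \<omega>)" using Suc.prems(2) by (simp add: cnt_Suc)
    then show ?thesis using False Suc.IH[OF ng] by simp
  qed
qed

lemma INFM_cnt:
  assumes "INFM n. \<omega> !! n \<in> D"
  shows "\<exists>N. k \<le> cnt D N \<omega>"
proof -
  have "infinite {n. \<omega> !! n \<in> D}" using assms by (simp add: INFM_iff_infinite)
  then obtain B where B: "finite B" "card B = k" "B \<subseteq> {n. \<omega> !! n \<in> D}"
    using infinite_arbitrarily_large by blast
  define N where "N = Suc (Max (insert 0 B))"
  have "B \<subseteq> {..<N}" using B by (auto simp: N_def less_Suc_eq_le)
  have "k = (\<Sum>n\<in>B. 1::nat)" using B by simp
  also have "\<dots> = (\<Sum>n\<in>B. if \<omega> !! n \<in> D then 1 else 0)" using B by (intro sum.cong) auto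
  also have "\<dots> \<le> (\<Sum>n<N. if \<omega> !! n \<in> D then 1 else 0)"
    using \<open>B \<subseteq> {..<N}\<close> by (intro sum_mono2) auto
  finally show ?thesis unfolding cnt_def by blast
qed

context pathm begin

lemma AE_BC:
  assumes [measurable]: "D \<in> sets borel" "D' \<in> sets borel"
    and eps: "0 < \<epsilon>" and e1: "\<epsilon> \<le> 1" and Kb: "\<And>s. s \<in> D \<Longrightarrow> \<epsilon> \<le> measure (K s) D'"
  shows "AE \<omega> in P s. (INFM n. \<omega> !! n \<in> D) \<longrightarrow> (INFM n. \<omega> !! n \<in> D \<and> \<omega> !! Suc n \<in> D')"
proof -
  define E0 where "E0 = {\<omega>. (INFM n. \<omega> !! n \<in> D) \<and> (\<forall>n. \<not> (\<omega> !! n \<in> D \<and> \<omega> !! Suc n \<in> D'))}"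
  have mE0[measurable]: "E0 \<in> sets SB"
  proof -
    have "{\<omega>\<in>space SB. (\<forall>m. \<exists>n>m. \<omega> !! n \<in> D) \<and> (\<forall>n. \<not> (\<omega> !! n \<in> D \<and> \<omega> !! Suc n \<in> D'))} \<in> sets SB"
      by measurable
    then show ?thesis by (simp add: E0_def INFM_nat)
  qed
  have E00: "emeasure (P t) E0 = 0" for t
  proof -
    have bnd: "measure (P t) E0 \<le> (1 - \<epsilon>) ^ k" for k
    proof -
      have "E0 \<subseteq> (\<Union>N. Av D D' k N)"
      proof
        fix \<omega> assume "\<omega> \<in> E0"
        then have h: "INFM n. \<omega> !! n \<in> D" "\<forall>n. \<not> (\<omega> !! n \<in> D \<and> \<omega> !! Suc n \<in> D')"
          by (auto simp: E0_def)
        obtain N where "k \<le> cnt D N \<omega>" using INFM_cnt[OF h(1)] by blast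
        then show "\<omega> \<in> (\<Union>N. Av D D' k N)" using in_Av[OF h(2)] by blast
      qed
      then have "emeasure (P t) E0 \<le> emeasure (P t) (\<Union>N. Av D D' k N)"
        by (intro emeasure_mono) auto
      also have "\<dots> = (SUP N. emeasure (P t) (Av D D' k N))"
      proof (rule SUP_emeasure_incseq[symmetric])
        show "range (Av D D' k) \<subseteq> sets (P t)" using Av_measurable[OF assms(1,2)] by auto
        show "incseq (Av D D' k)" unfolding incseq_Suc_iff using Av_mono by blast
      qed
      also have "\<dots> \<le> ennreal ((1 - \<epsilon>) ^ k)"
        by (intro SUP_least Av_bound[OF assms(1,2) eps e1 Kb]) auto
      finally show ?thesis
        using eps e1 by (simp add: P_em)
    qed
    have "(\<lambda>k. (1 - \<epsilon>) ^ k) \<longlonglongrightarrow> 0"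
      using eps e1 by (intro LIMSEQ_power_zero) auto
    then have "measure (P t) E0 \<le> 0"
      by (rule LIMSEQ_le_const) (use bnd in auto)
    then show ?thesis
      by (simp add: P_em measure_le_0_iff)
  qed
  have "AE \<omega> in P s. \<forall>m. sdrop m \<omega> \<notin> E0"
    unfolding AE_all_countable
  proof
    fix m
    have "{\<omega>\<in>space (P s). sdrop m \<omega> \<in> E0} \<in> null_sets (P s)"
    proof -
      have "{\<omega>\<in>space SB. sdrop m \<omega> \<in> E0} \<in> sets SB" by measurable
      then show ?thesis using null_shift[OF mE0 E00, of s m] by (simp add: null_sets_def)
    qed
    then show "AE \<omega> in P s. sdrop m \<omega> \<notin> E0"
      by (rule AE_I') auto
  qed
  then show ?thesis
  proof (rule eventually_mono)
    fix \<omega> assume h: "\<forall>m. sdrop m \<omega> \<notin> E0"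
    show "(INFM n. \<omega> !! n \<in> D) \<longrightarrow> (INFM n. \<omega> !! n \<in> D \<and> \<omega> !! Suc n \<in> D')"
    proof (rule impI, rule ccontr)
      assume i: "INFM n. \<omega> !! n \<in> D" and ni: "\<not> (INFM n. \<omega> !! n \<in> D \<and> \<omega> !! Suc n \<in> D')"
      then obtain m where m: "\<forall>n\<ge>m. \<not> (\<omega> !! n \<in> D \<and> \<omega> !! Suc n \<in> D')"
        by (auto simp: MOST_nat_le)
      have "INFM n. sdrop m \<omega> !! n \<in> D"
        unfolding INFM_nat
      proof
        fix m'
        obtain n where "n > m' + m" "\<omega> !! n \<in> D" using i unfolding INFM_nat by blast
        then show "\<exists>n>m'. sdrop m \<omega> !! n \<in> D"
          by (intro exI[of _ "n - m"]) (auto simp: sdrop_snth)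
      qed
      moreover have "\<forall>n. \<not> (sdrop m \<omega> !! n \<in> D \<and> sdrop m \<omega> !! Suc n \<in> D')"
        using m by (auto simp: sdrop_snth)
      ultimately have "sdrop m \<omega> \<in> E0" by (simp add: E0_def)
      with h show False by blast
    qed
  qed
qed

end

lemma snth_grun: "grun g h xs !! n = g (h @ stake n (grun g h xs)) (xs !! n)"
proof (induction n arbitrary: h xs)
  case 0 then show ?case by (subst grun.ctr) simp
next
  case (Suc n)
  show ?case by (subst (1 2) grun.ctr) (simp add: Suc)
qed

context setting begin

context fixes C m assumes trp: "trap C m" begin

abbreviation E where "E \<equiv> Erel C"

definition Dom where "Dom = {d. (d, m) \<in> E\<^sup>*}"
definition dist where "dist d = (LEAST k. (d, m) \<in> E ^^ k)"
definition nx where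
  "nx d = (if d = m then (SOME d'. d' \<in> C \<and> d' \<in> Fo m (\<sigma> m))
           else (SOME d'. (d, d') \<in> E \<and> d' \<in> Dom \<and> dist d' < dist d))"

lemma C_Sh: "C \<subseteq> Sh" and mC: "m \<in> C" and FuC: "\<And>d. d \<in> C \<Longrightarrow> Fu d (\<sigma> d) \<subseteq> C"
  and FoC: "\<And>d. d \<in> C \<Longrightarrow> \<exists>d'\<in>C. d' \<in> Fo d (\<sigma> d)" and odd_m: "odd (pr m)"
  and pr_le: "\<And>d. d \<in> C \<Longrightarrow> pr d \<le> pr m"
  and C_Dom: "C \<subseteq> Dom" and c_Dom: "c \<in> Dom"
  using trp unfolding trap_def Dom_def by auto

lemma mSh: "m \<in> Sh" using C_Sh mC by auto

lemma Dom_Sh: "d \<in> Dom \<Longrightarrow> d \<in> Sh"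
proof -
  assume "d \<in> Dom"
  then have "(d, m) \<in> E\<^sup>*" by (simp add: Dom_def)
  then show "d \<in> Sh"
    by (rule converse_rtranclE) (auto simp: mSh Erel_def)
qed

lemma finDom: "finite Dom" using Dom_Sh finSh by (meson finite_subset subsetI)

lemma nx_props:
  assumes d: "d \<in> Dom"
  shows "(d, nx d) \<in> E \<and> nx d \<in> Dom \<and> (d \<noteq> m \<longrightarrow> dist (nx d) < dist d)"
proof (cases "d = m")
  case True
  have "\<exists>d'. d' \<in> C \<and> d' \<in> Fo m (\<sigma> m)" using FoC[OF mC] by blast
  then have "(SOME d'. d' \<in> C \<and> d' \<in> Fo m (\<sigma> m)) \<in> C \<and> (SOME d'. d' \<in> C \<and> d' \<in> Fo m (\<sigma> m)) \<in> Fo m (\<sigma> m)"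
    by (rule someI_ex)
  then have "nx d \<in> C \<and> nx d \<in> Fo m (\<sigma> m)" unfolding nx_def using True by simp
  then show ?thesis using True mSh mC C_Dom by (auto simp: Erel_def)
next
  case False
  have "(d, m) \<in> E\<^sup>*" using d by (simp add: Dom_def)
  then obtain k where "(d, m) \<in> E ^^ k" using rtrancl_power by blast
  then have dk: "(d, m) \<in> E ^^ dist d" unfolding dist_def by (rule LeastI)
  have "dist d \<noteq> 0" using dk False by (auto)
  then obtain k' where k': "dist d = Suc k'" by (cases "dist d") auto
  then obtain y where y: "(d, y) \<in> E" "(y, m) \<in> E ^^ k'" using relpow_Suc_D2 dk by metis
  have "y \<in> Dom" using y(2) relpow_imp_rtrancl by (auto simp: Dom_def)
  moreover have "dist y \<le> k'" unfolding dist_def using y(2) by (rule Least_le)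
  ultimately have "\<exists>d'. (d, d') \<in> E \<and> d' \<in> Dom \<and> dist d' < dist d" using y k' by (intro exI[of _ y]) auto
  then have "(d, nx d) \<in> E \<and> nx d \<in> Dom \<and> dist (nx d) < dist d"
    unfolding nx_def using False by (simp only: if_False) (rule someI_ex)
  then show ?thesis by simp
qed

lemma nx_E: "d \<in> Dom \<Longrightarrow> (d, nx d) \<in> E" and nx_Dom: "d \<in> Dom \<Longrightarrow> nx d \<in> Dom"
  and nx_dist: "d \<in> Dom \<Longrightarrow> d \<noteq> m \<Longrightarrow> dist (nx d) < dist d"
  using nx_props by auto

lemma nx_Fo: "d \<in> Dom \<Longrightarrow> nx d \<in> Fo d (\<sigma> d)" using nx_E by (auto simp: Erel_def)
lemma nx_C: "d \<in> C \<Longrightarrow> nx d \<in> C" using nx_E C_Dom by (auto simp: Erel_def)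

definition Rsel where
  "Rsel d u = (if d \<in> Dom \<and> u = \<sigma> d then insert (nx d) (Fu d u) else insert (SOME x. x \<in> Fo d u) (Fu d u))"

lemma Rsel_sub: "d \<in> Sh \<Longrightarrow> Fu d u \<subseteq> Rsel d u \<and> Rsel d u \<subseteq> Fo d u"
proof -
  assume d: "d \<in> Sh"
  have "(SOME x. x \<in> Fo d u) \<in> Fo d u" using Fo_ne[OF d] by (simp add: some_in_eq)
  then show ?thesis using Fu_Fo[OF d] nx_Fo by (auto simp: Rsel_def)
qed

lemma Rsel_Sh: "d \<in> Sh \<Longrightarrow> Rsel d u \<subseteq> Sh" using Rsel_sub Fo_Sh by blast
lemma Rsel_fin: "d \<in> Sh \<Longrightarrow> finite (Rsel d u)" by (rule finite_subset[OF Rsel_Sh finSh])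
lemma Rsel_ne: "Rsel d u \<noteq> {}" by (simp add: Rsel_def)
lemma Rsel_card: "d \<in> Sh \<Longrightarrow> card (Rsel d u) \<le> card Sh" by (rule card_mono[OF finSh Rsel_Sh])

lemma Rsel_Vr: "d \<in> Sh \<Longrightarrow> Rsel d u \<in> Vr_of Fo Fu d u"
proof -
  assume d: "d \<in> Sh"
  have fin: "finite (Fu d u)" by (rule finite_subset[OF Fu_Sh[OF d] finSh])
  have ci: "card (insert x (Fu d u)) \<le> card (Fu d u) + 1" for x
    using fin by (simp add: card_insert_if)
  then have "card (Rsel d u) \<le> card (Fu d u) + 1"
  proof -
    have "\<exists>x. Rsel d u = insert x (Fu d u)" unfolding Rsel_def by auto
    then obtain x where "Rsel d u = insert x (Fu d u)" by blast
    with ci show ?thesis by metis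
  qed
  moreover have "1 \<le> card (Rsel d u)" using Rsel_fin[OF d] Rsel_ne by (simp add: Suc_leI card_gt_0_iff)
  ultimately show ?thesis using Rsel_sub[OF d] by (simp add: Vr_of_def)
qed

lemma Rsel_C: "d \<in> C \<Longrightarrow> Rsel d (\<sigma> d) \<subseteq> C"
  using C_Dom FuC nx_C by (auto simp: Rsel_def)

lemma nx_Rsel: "d \<in> Dom \<Longrightarrow> nx d \<in> Rsel d (\<sigma> d)" by (simp add: Rsel_def)

definition pi1 :: "('s, 'u) gvert list \<Rightarrow> ('s, 'u) gvert pmf" where
  "pi1 h = (case last h of GV1 d u \<Rightarrow> return_pmf (GVr (Rsel d u)) | _ \<Rightarrow> return_pmf (GV0 {}))"

definition prefv :: "('s, 'u) gvert list \<Rightarrow> ('s, 'u) gvert" where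
  "prefv h = (case last (butlast h) of GV1 d u \<Rightarrow> GV0 (nx d) | _ \<Rightarrow> GV0 {})"

lemma p1: "p1_strategy Sh Fo Fu pi1"
  unfolding p1_strategy_def pi1_def using Rsel_Vr by auto


abbreviation stp where "stp \<equiv> gstep \<sigma> pi1"
abbreviation gg where "gg \<equiv> gs stp prefv"

definition rho :: "real stream \<Rightarrow> ('s, 'u) gvert stream" where
  "rho xs = GV0 c ## grun gg [GV0 c] xs"

lemma rho_Suc: "rho xs !! Suc n = samp (stp (stake (Suc n) (rho xs))) (prefv (stake (Suc n) (rho xs))) (xs !! n)"
  unfolding rho_def by (simp add: snth_grun gs_def)

lemma last_stake: "last (stake (Suc n) s) = s !! n" and butlast_stake: "butlast (stake (Suc n) s) = stake n s"
  by (simp_all only: stake_Suc last_snoc butlast_snoc)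

lemma step_in: "rho xs !! Suc n \<in> set_pmf (stp (stake (Suc n) (rho xs)))"
  by (simp only: rho_Suc samp_in)

lemma stp_eq: "last h = v \<Longrightarrow> stp h = (case v of GV0 d \<Rightarrow> return_pmf (GV1 d (\<sigma> d))
     | GV1 d u \<Rightarrow> pi1 h | GVr R \<Rightarrow> pmf_of_set (GV0 ` R))"
  unfolding gstep_def by simp

lemma step_GV0: "rho xs !! n = GV0 d \<Longrightarrow> rho xs !! Suc n = GV1 d (\<sigma> d)"
proof -
  assume h: "rho xs !! n = GV0 d"
  have "last (stake (Suc n) (rho xs)) = GV0 d" by (simp only: last_stake h)
  then have "stp (stake (Suc n) (rho xs)) = return_pmf (GV1 d (\<sigma> d))" by (subst stp_eq) auto
  then show ?thesis using step_in[of xs n] by simp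
qed

lemma step_GV1: "rho xs !! n = GV1 d u \<Longrightarrow> rho xs !! Suc n = GVr (Rsel d u)"
proof -
  assume h: "rho xs !! n = GV1 d u"
  have l: "last (stake (Suc n) (rho xs)) = GV1 d u" by (simp only: last_stake h)
  then have "stp (stake (Suc n) (rho xs)) = return_pmf (GVr (Rsel d u))"
    by (subst stp_eq) (auto simp: pi1_def)
  then show ?thesis using step_in[of xs n] by simp
qed

lemma step_GVr: "rho xs !! n = GVr R \<Longrightarrow> finite R \<Longrightarrow> R \<noteq> {} \<Longrightarrow> rho xs !! Suc n \<in> GV0 ` R"
proof -
  assume h: "rho xs !! n = GVr R" and R: "finite R" "R \<noteq> {}"
  have "last (stake (Suc n) (rho xs)) = GVr R" by (simp only: last_stake h)
  then have "stp (stake (Suc n) (rho xs)) = pmf_of_set (GV0 ` R)" by (subst stp_eq) auto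
  then show ?thesis using step_in[of xs n] R by simp
qed

lemma step_lucky:
  assumes "rho xs !! n = GV1 d u" "rho xs !! Suc n = GVr R" "finite R" "R \<noteq> {}" "nx d \<in> R"
    "xs !! Suc n < 1 / card R"
  shows "rho xs !! Suc (Suc n) = GV0 (nx d)"
proof -
  let ?H = "stake (Suc (Suc n)) (rho xs)"
  have "last ?H = GVr R" by (simp only: last_stake assms(2))
  then have st: "stp ?H = pmf_of_set (GV0 ` R)" by (subst stp_eq) auto
  have "last (butlast ?H) = GV1 d u" by (simp only: butlast_stake last_stake assms(1))
  then have pf: "prefv ?H = GV0 (nx d)" unfolding prefv_def by simp
  have inj: "inj_on GV0 R" by (auto simp: inj_on_def)
  have pm: "pmf (pmf_of_set (GV0 ` R)) (GV0 (nx d)) = 1 / card R"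
    using assms(3-5) by (simp add: card_image[OF inj])
  have ins: "GV0 (nx d) \<in> set_pmf (pmf_of_set (GV0 ` R))" using assms(3-5) by simp
  have "samp (pmf_of_set (GV0 ` R)) (GV0 (nx d)) (xs !! Suc n) = GV0 (nx d)"
    by (rule samp_pref[OF ins]) (subst pm, rule assms(6))
  then show ?thesis by (simp only: rho_Suc[of xs "Suc n"] st pf)
qed

definition gcell :: "('s, 'u) gvert \<Rightarrow> 's set" where
  "gcell v = (case v of GV0 d \<Rightarrow> d | _ \<Rightarrow> {})"

definition dd :: "real stream \<Rightarrow> nat \<Rightarrow> 's set" where
  "dd xs k = gcell (rho xs !! (3 * k))"

lemma dd_inv: "rho xs !! (3 * k) = GV0 (dd xs k) \<and> dd xs k \<in> Sh"
proof (induction k)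
  case 0 then show ?case using cSh by (simp add: dd_def gcell_def rho_def)
next
  case (Suc k)
  let ?d = "dd xs k"
  have 1: "rho xs !! Suc (3 * k) = GV1 ?d (\<sigma> ?d)" using Suc step_GV0 by blast
  have 2: "rho xs !! Suc (Suc (3 * k)) = GVr (Rsel ?d (\<sigma> ?d))" using 1 step_GV1 by blast
  have "rho xs !! Suc (Suc (Suc (3 * k))) \<in> GV0 ` Rsel ?d (\<sigma> ?d)"
    using 2 Suc Rsel_fin Rsel_ne step_GVr by blast
  then obtain d' where d': "d' \<in> Rsel ?d (\<sigma> ?d)" "rho xs !! Suc (Suc (Suc (3 * k))) = GV0 d'" by blast
  have e3: "3 * Suc k = Suc (Suc (Suc (3 * k)))" by simp
  have r: "rho xs !! (3 * Suc k) = GV0 d'" using d'(2) by (simp only: e3)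
  then have "dd xs (Suc k) = d'" unfolding dd_def by (simp only: gcell_def gvert.case)
  moreover have "d' \<in> Sh" using Rsel_Sh[of ?d] Suc d'(1) by blast
  ultimately show ?case using r by simp
qed

lemma rho0: "rho xs !! (3 * k) = GV0 (dd xs k)" and dd_Sh: "dd xs k \<in> Sh"
  using dd_inv by auto

lemma rho1: "rho xs !! Suc (3 * k) = GV1 (dd xs k) (\<sigma> (dd xs k))"
  using rho0 step_GV0 by blast

lemma rho2: "rho xs !! Suc (Suc (3 * k)) = GVr (Rsel (dd xs k) (\<sigma> (dd xs k)))"
  using rho1 step_GV1 by blast

lemma dd_next: "dd xs (Suc k) \<in> Rsel (dd xs k) (\<sigma> (dd xs k))"
proof -
  have "rho xs !! Suc (Suc (Suc (3 * k))) \<in> GV0 ` Rsel (dd xs k) (\<sigma> (dd xs k))"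
    using rho2 dd_Sh Rsel_fin Rsel_ne step_GVr by blast
  moreover have "rho xs !! Suc (Suc (Suc (3 * k))) = GV0 (dd xs (Suc k))"
  proof -
    have e3: "3 * Suc k = Suc (Suc (Suc (3 * k)))" by simp
    show ?thesis using rho0[of xs "Suc k"] by (simp only: e3)
  qed
  ultimately show ?thesis by auto
qed

definition \<delta> :: real where "\<delta> = 1 / card Sh"

lemma card_Sh_pos: "0 < card Sh" using cSh finSh card_gt_0_iff by blast

lemma delta_pos: "0 < \<delta>" and delta_le1: "\<delta> \<le> 1"
  using card_Sh_pos by (auto simp: \<delta>_def)

lemma dd_lucky:
  assumes "dd xs k \<in> Dom" "xs !! Suc (Suc (3 * k)) < \<delta>"
  shows "dd xs (Suc k) = nx (dd xs k)"
proof -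
  let ?d = "dd xs k" let ?R = "Rsel ?d (\<sigma> ?d)"
  have fin: "finite ?R" and ne: "?R \<noteq> {}" using Rsel_fin dd_Sh Rsel_ne by auto
  have "card ?R \<le> card Sh" using Rsel_card dd_Sh by blast
  moreover have "0 < card ?R" using fin ne card_gt_0_iff by blast
  ultimately have "\<delta> \<le> 1 / card ?R" unfolding \<delta>_def by (simp add: frac_le)
  then have "xs !! Suc (Suc (3 * k)) < 1 / card ?R" using assms(2) by simp
  then have "rho xs !! Suc (Suc (Suc (3 * k))) = GV0 (nx ?d)"
    using step_lucky[OF rho1 rho2 fin ne nx_Rsel[OF assms(1)]] by simp
  moreover have "rho xs !! Suc (Suc (Suc (3 * k))) = GV0 (dd xs (Suc k))"
  proof -
    have e3: "3 * Suc k = Suc (Suc (Suc (3 * k)))" by simp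
    show ?thesis using rho0[of xs "Suc k"] by (simp only: e3)
  qed
  ultimately show ?thesis by simp
qed

lemma dd_C: "dd xs k \<in> C \<Longrightarrow> dd xs (Suc k) \<in> C"
  using dd_next Rsel_C by blast

lemma rho_GV0: "rho xs !! n = GV0 d \<Longrightarrow> d = dd xs (n div 3)"
proof -
  assume h: "rho xs !! n = GV0 d"
  have n: "n = 3 * (n div 3) + n mod 3" by simp
  have "n mod 3 = 0 \<or> n mod 3 = 1 \<or> n mod 3 = 2" by auto
  then show ?thesis
  proof (elim disjE)
    assume "n mod 3 = 0"
    then have "n = 3 * (n div 3)" using n by presburger
    then show ?thesis using h rho0[of xs "n div 3"] by (metis gvert.inject(1))
  next
    assume "n mod 3 = 1"
    then have "n = Suc (3 * (n div 3))" using n by presburger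
    then show ?thesis using h rho1[of xs "n div 3"] by (metis gvert.distinct(1))
  next
    assume "n mod 3 = 2"
    then have "n = Suc (Suc (3 * (n div 3)))" using n by presburger
    then show ?thesis using h rho2[of xs "n div 3"] by (metis gvert.distinct(3))
  qed
qed


lemma dist_0: "d \<in> Dom \<Longrightarrow> dist d = 0 \<Longrightarrow> d = m"
proof -
  assume d: "d \<in> Dom" and z: "dist d = 0"
  have "(d, m) \<in> E\<^sup>*" using d by (simp add: Dom_def)
  then obtain k where "(d, m) \<in> E ^^ k" using rtrancl_power by blast
  then have "(d, m) \<in> E ^^ dist d" unfolding dist_def by (rule LeastI)
  then show "d = m" using z by simp
qed

lemma force:
  "dd xs k \<in> Dom \<Longrightarrow> dist (dd xs k) \<le> j \<Longrightarrow> (\<forall>i<j. xs !! Suc (Suc (3 * (k + i))) < \<delta>) \<Longrightarrow>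
   \<exists>i\<le>j. dd xs (k + i) = m"
proof (induction j arbitrary: k)
  case 0
  then have "dd xs k = m" using dist_0 by simp
  then show ?case by (intro exI[of _ 0]) simp
next
  case (Suc j)
  show ?case
  proof (cases "dd xs k = m")
    case True then show ?thesis by (intro exI[of _ 0]) simp
  next
    case False
    have l: "xs !! Suc (Suc (3 * k)) < \<delta>" using Suc.prems(3)[rule_format, of 0] by simp
    have nk: "dd xs (Suc k) = nx (dd xs k)" by (rule dd_lucky[OF Suc.prems(1) l])
    have D: "dd xs (Suc k) \<in> Dom" using nk nx_Dom Suc.prems(1) by simp
    have "dist (dd xs (Suc k)) \<le> j" using nk nx_dist[OF Suc.prems(1) False] Suc.prems(2) by simp
    moreover have "\<forall>i<j. xs !! Suc (Suc (3 * (Suc k + i))) < \<delta>"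
    proof (intro allI impI)
      fix i assume "i < j"
      then have "Suc i < Suc j" by simp
      then have "xs !! Suc (Suc (3 * (k + Suc i))) < \<delta>" using Suc.prems(3) by blast
      then show "xs !! Suc (Suc (3 * (Suc k + i))) < \<delta>" by simp
    qed
    ultimately obtain i where "i \<le> j" "dd xs (Suc k + i) = m" using Suc.IH[OF D] by blast
    then show ?thesis by (intro exI[of _ "Suc i"]) simp
  qed
qed

definition Dmax where "Dmax = Max (dist ` Dom)"
definition Lw where "Lw = 3 * Suc Dmax"

lemma dist_le: "d \<in> Dom \<Longrightarrow> dist d \<le> Dmax"
  unfolding Dmax_def using finDom by (intro Max_ge) auto

lemma window:
  assumes w: "win Lw \<delta> (sdrop (q * Lw) xs)" and D: "dd xs (q * Suc Dmax) \<in> Dom"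
  shows "\<exists>i\<le>Dmax. dd xs (q * Suc Dmax + i) = m"
proof (rule force[OF D dist_le[OF D]])
  show "\<forall>i<Dmax. xs !! Suc (Suc (3 * (q * Suc Dmax + i))) < \<delta>"
  proof (intro allI impI)
    fix i assume i: "i < Dmax"
    then have "Suc (Suc (3 * i)) < Lw" by (simp add: Lw_def)
    then have "sdrop (q * Lw) xs !! Suc (Suc (3 * i)) < \<delta>" using w unfolding win_def by blast
    moreover have "q * Lw + Suc (Suc (3 * i)) = Suc (Suc (3 * (q * Suc Dmax + i)))"
      by (simp add: Lw_def algebra_simps)
    ultimately show "xs !! Suc (Suc (3 * (q * Suc Dmax + i))) < \<delta>" by (simp only: sdrop_snth)
  qed
qed

lemma dd0: "dd xs 0 = c" by (simp add: dd_def rho_def gcell_def)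

lemma good_notparity:
  assumes w: "win Lw \<delta> xs" and z: "xs \<in> Zset Lw \<delta>"
  shows "\<not> parity l (Bhat Sh B) (rho xs)"
proof -
  have "\<exists>i\<le>Dmax. dd xs (0 * Suc Dmax + i) = m"
    using window[of 0 xs] w dd0 c_Dom by simp
  then obtain k0 where k0: "dd xs k0 = m" by auto
  have allC: "k \<ge> k0 \<Longrightarrow> dd xs k \<in> C" for k
  proof (induction k rule: dec_induct)
    case base then show ?case using k0 mC by simp
  next
    case (step k) then show ?case using dd_C by blast
  qed
  have inf: "\<exists>k\<ge>j. dd xs k = m" for j
  proof -
    obtain q where q: "q \<ge> max j k0" "win Lw \<delta> (sdrop (q * Lw) xs)"
      using z unfolding Zset_def by blast
    have "q * Suc Dmax \<ge> q" by simp
    then have "dd xs (q * Suc Dmax) \<in> C" using q allC by simp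
    then obtain i where "dd xs (q * Suc Dmax + i) = m" using window[OF q(2)] C_Dom by blast
    moreover have "q * Suc Dmax + i \<ge> j" using q \<open>q * Suc Dmax \<ge> q\<close> by simp
    ultimately show ?thesis by blast
  qed
  have prm: "pr m \<in> {1..l}" "m \<subseteq> B (pr m)" using pr_prop[OF mSh] by auto
  have I1: "INFM n. rho xs !! n \<in> Bhat Sh B (pr m)"
    unfolding INFM_nat
  proof
    fix M
    obtain k where k: "k \<ge> Suc M" "dd xs k = m" using inf by blast
    have "rho xs !! (3 * k) = GV0 m" using rho0[of xs k] k by simp
    moreover have "GV0 m \<in> Bhat Sh B (pr m)" using prm mSh by (auto simp: Bhat_def)
    moreover have "3 * k > M" using k by simp
    ultimately show "\<exists>n>M. rho xs !! n \<in> Bhat Sh B (pr m)" by metis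
  qed
  have I2: "\<not> (INFM n. rho xs !! n \<in> Bhat Sh B j)" if j: "j \<in> {1..l}" "pr m < j" for j
  proof
    assume "INFM n. rho xs !! n \<in> Bhat Sh B j"
    then obtain n where n: "n \<ge> 3 * k0" "rho xs !! n \<in> Bhat Sh B j" using INFM_ge by blast
    then obtain d where d: "d \<in> Sh" "d \<subseteq> B j" "rho xs !! n = GV0 d" by (auto simp: Bhat_def)
    have "d = dd xs (n div 3)" using rho_GV0 d(3) by blast
    moreover have "n div 3 \<ge> k0" using n(1) by simp
    ultimately have "d \<in> C" using allC by simp
    then have "pr d \<le> pr m" by (rule pr_le)
    moreover have "j = pr d" using pr_unique[OF d(1) j(1) d(2)] .
    ultimately show False using j by simp
  qed
  show ?thesis
    unfolding parity_def using prm(1) odd_m I1 I2 by blast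
qed

lemma rho_measurable: "rho \<in> SS \<rightarrow>\<^sub>M gruns"
proof -
  have [measurable]: "grun gg [GV0 c] \<in> SS \<rightarrow>\<^sub>M gruns" by (rule grun_measurable)
  show ?thesis unfolding rho_def by measurable
qed

lemma game_lose: "measure (run_measure (Qg stp prefv) (GV0 c)) {\<omega>. parity l (Bhat Sh B) \<omega>} < 1"
proof -
  interpret S: prob_space SS by (rule prob_space_SS)
  let ?PS = "{\<omega>. parity l (Bhat Sh B) \<omega>}"
  have PS: "?PS \<in> sets gruns" by (rule parity_sets) auto
  have rm: "run_measure (Qg stp prefv) (GV0 c) = distr SS gruns rho"
    unfolding run_measure_def Qg_def rho_def
    by (subst distr_distr) (auto simp: comp_def intro: grun_measurable)
  have "measure (distr SS gruns rho) ?PS = S.prob (rho -` ?PS \<inter> space SS)"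
    by (rule measure_distr[OF rho_measurable PS])
  also have "\<dots> \<le> S.prob (UNIV - ({xs. win Lw \<delta> xs} \<inter> Zset Lw \<delta>))"
  proof (rule S.finite_measure_mono)
    show "rho -` ?PS \<inter> space SS \<subseteq> UNIV - ({xs. win Lw \<delta> xs} \<inter> Zset Lw \<delta>)"
      using good_notparity by auto
    have "{xs\<in>space SS. win Lw \<delta> xs} \<in> sets SS" by measurable
    then have "{xs. win Lw \<delta> xs} \<inter> Zset Lw \<delta> \<in> sets SS" by simp
    then show "UNIV - ({xs. win Lw \<delta> xs} \<inter> Zset Lw \<delta>) \<in> sets SS"
      using sets.compl_sets[of _ SS] by simp
  qed
  also have "\<dots> = 1 - \<delta> ^ Lw"
  proof -
    have "{xs\<in>space SS. win Lw \<delta> xs} \<in> sets SS" by measurable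
    then have "{xs. win Lw \<delta> xs} \<inter> Zset Lw \<delta> \<in> sets SS" by simp
    then have "S.prob (space SS - ({xs. win Lw \<delta> xs} \<inter> Zset Lw \<delta>)) = 1 - S.prob ({xs. win Lw \<delta> xs} \<inter> Zset Lw \<delta>)"
      by (rule S.prob_compl)
    then show ?thesis using measure_win_Zset[OF delta_pos delta_le1] by simp
  qed
  also have "\<dots> < 1" using delta_pos by simp
  finally show ?thesis using rm by simp
qed

end
end

context setting begin

lemma main:
  assumes win: "\<forall>\<pi>1 Q. p1_strategy Sh Fo Fu \<pi>1 \<longrightarrow> is_hist_measure (gstep \<sigma> \<pi>1) Q \<longrightarrow>
                 measure (run_measure Q (GV0 c)) {\<omega>. parity l (Bhat Sh B) \<omega>} = 1"
    and PM: "is_path_measure (\<lambda>s. T s (refine Sh \<sigma> s)) P"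
  shows "c \<subseteq> WinDom l B P"
proof
  fix s assume sc: "s \<in> c"
  let ?K = "\<lambda>s. T s (refine Sh \<sigma> s)"
  have PM1: "P \<in> borel \<rightarrow>\<^sub>M prob_algebra (stream_space borel)"
    and PM2: "\<And>s. P s = ?K s \<bind> (\<lambda>t. distr (P t) (stream_space borel) (\<lambda>\<omega>. s ## \<omega>))"
    using PM unfolding is_path_measure_def by blast+
  interpret pathm ?K P
    by (rule pathm.intro) (rule T_prob, rule T_sets, rule PM1, rule PM2)
  have Kd: "?K s' = T s' (\<sigma> d)" if "d \<in> Sh" "s' \<in> d" for s' d
    using cell_of_eq[OF that] by (simp add: refine_def)
  have Kem: "emeasure (?K s') A = ennreal (measure (?K s') A)" for s' A
  proof -
    interpret prob_space "?K s'" by (rule T_prob)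
    show ?thesis by (rule emeasure_eq_measure)
  qed
  have a: "AE \<omega> in P s. \<forall>p\<in>Sh \<times> Sh. snd p \<notin> Fo (fst p) (\<sigma> (fst p)) \<longrightarrow>
              (\<forall>n. \<not> (\<omega> !! n \<in> fst p \<and> \<omega> !! Suc n \<in> snd p))"
  proof (rule AE_finite_allI)
    show "finite (Sh \<times> Sh)" using finSh by simp
    fix p assume p: "p \<in> Sh \<times> Sh"
    obtain d d' where dd: "p = (d, d')" "d \<in> Sh" "d' \<in> Sh" using p by auto
    show "AE \<omega> in P s. snd p \<notin> Fo (fst p) (\<sigma> (fst p)) \<longrightarrow> (\<forall>n. \<not> (\<omega> !! n \<in> fst p \<and> \<omega> !! Suc n \<in> snd p))"
    proof (cases "d' \<in> Fo d (\<sigma> d)")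
      case True then show ?thesis using dd by simp
    next
      case False
      have "AE \<omega> in P s. \<forall>n. \<not> (\<omega> !! n \<in> d \<and> \<omega> !! Suc n \<in> d')"
      proof (rule AE_step)
        show "d \<in> sets borel" "d' \<in> sets borel" using Sh_borel dd by auto
        fix s' assume s': "s' \<in> d"
        have "\<not> measure (T s' (\<sigma> d)) d' > 0" using Fo_pos[OF dd(2) dd(3) s'] False by blast
        then have "measure (T s' (\<sigma> d)) d' = 0" using measure_nonneg[of "T s' (\<sigma> d)" d'] by linarith
        then show "emeasure (?K s') d' = 0" using Kd[OF dd(2) s'] Kem[of s' d'] by simp
      qed
      then show ?thesis using dd by simp
    qed
  qed
  have b: "AE \<omega> in P s. \<forall>p\<in>Sigma Sh (\<lambda>d. Fu d (\<sigma> d)).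
       (INFM n. \<omega> !! n \<in> fst p) \<longrightarrow> (INFM n. \<omega> !! n \<in> fst p \<and> \<omega> !! Suc n \<in> snd p)"
  proof (rule AE_finite_allI)
    show "finite (Sigma Sh (\<lambda>d. Fu d (\<sigma> d)))"
      using finSh Fu_Sh finite_subset by (intro finite_SigmaI) blast+
    fix p assume p: "p \<in> Sigma Sh (\<lambda>d. Fu d (\<sigma> d))"
    obtain d d' where dd: "p = (d, d')" "d \<in> Sh" "d' \<in> Fu d (\<sigma> d)" using p by auto
    obtain \<epsilon> where e: "\<epsilon> > 0" "\<forall>s\<in>d. measure (T s (\<sigma> d)) d' \<ge> \<epsilon>" using Fu_eps[OF dd(2,3)] by blast
    have "AE \<omega> in P s. (INFM n. \<omega> !! n \<in> d) \<longrightarrow> (INFM n. \<omega> !! n \<in> d \<and> \<omega> !! Suc n \<in> d')"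
    proof (rule AE_BC[of _ _ "min \<epsilon> 1"])
      show "d \<in> sets borel" using Sh_borel dd by auto
      show "d' \<in> sets borel" using Sh_borel Fu_Sh dd by blast
      show "0 < min \<epsilon> 1" "min \<epsilon> 1 \<le> 1" using e by auto
      fix s' assume s': "s' \<in> d"
      then show "min \<epsilon> 1 \<le> measure (?K s') d'" using e Kd[OF dd(2) s'] by fastforce
    qed
    then show "AE \<omega> in P s. (INFM n. \<omega> !! n \<in> fst p) \<longrightarrow> (INFM n. \<omega> !! n \<in> fst p \<and> \<omega> !! Suc n \<in> snd p)"
      using dd by simp
  qed
  have cc: "AE \<omega> in P s. shd \<omega> \<in> c"
  proof -
    have cb: "UNIV - c \<in> sets borel" using Sh_borel[OF cSh] by auto
    have "emeasure (P s) {\<omega>. shd \<omega> \<in> UNIV - c} = 0" using markov_shd[OF cb, of s] sc by simp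
    moreover have "{\<omega>. shd \<omega> \<in> UNIV - c} \<in> sets (P s)"
    proof -
      have "{\<omega>\<in>space SB. shd \<omega> \<in> UNIV - c} \<in> sets SB" using cb by measurable
      then show ?thesis by simp
    qed
    ultimately have "{\<omega>. shd \<omega> \<in> UNIV - c} \<in> null_sets (P s)" by (simp add: null_sets_def)
    then show ?thesis by (rule AE_I') auto
  qed
  have PS: "{\<omega>. parity l B \<omega>} \<in> sets (P s)"
    using parity_sets[of l B borel] B_borel by simp
  show "s \<in> WinDom l B P"
  proof (rule ccontr)
    assume "s \<notin> WinDom l B P"
    then have ne: "measure (P s) {\<omega>. parity l B \<omega>} \<noteq> 1" by (simp add: WinDom_def)
    interpret Ps: prob_space "P s" by (rule P_prob)
    have "Ps.prob (space (P s) - {\<omega>. parity l B \<omega>}) = 1 - Ps.prob {\<omega>. parity l B \<omega>}"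
      using PS by (rule Ps.prob_compl)
    then have pos: "emeasure (P s) (UNIV - {\<omega>. parity l B \<omega>}) \<noteq> 0"
      using ne by (simp add: Ps.emeasure_eq_measure)
    have "\<exists>\<omega>. \<not> parity l B \<omega> \<and> (\<forall>p\<in>Sh \<times> Sh. snd p \<notin> Fo (fst p) (\<sigma> (fst p)) \<longrightarrow>
              (\<forall>n. \<not> (\<omega> !! n \<in> fst p \<and> \<omega> !! Suc n \<in> snd p))) \<and>
           (\<forall>p\<in>Sigma Sh (\<lambda>d. Fu d (\<sigma> d)).
              (INFM n. \<omega> !! n \<in> fst p) \<longrightarrow> (INFM n. \<omega> !! n \<in> fst p \<and> \<omega> !! Suc n \<in> snd p)) \<and>
           shd \<omega> \<in> c"
    proof (rule ccontr)
      assume nex: "\<not> ?thesis"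
      have "AE \<omega> in P s. \<omega> \<notin> UNIV - {\<omega>. parity l B \<omega>}"
        using a b cc
      proof eventually_elim
        case (elim \<omega>) then show ?case using nex by blast
      qed
      moreover have PSc: "UNIV - {\<omega>. parity l B \<omega>} \<in> sets (P s)"
        using PS sets.compl_sets[of "{\<omega>. parity l B \<omega>}" "P s"] by simp
      ultimately have "emeasure (P s) (UNIV - {\<omega>. parity l B \<omega>}) = 0"
        using AE_iff_measurable[OF PSc, of "\<lambda>\<omega>. \<omega> \<notin> UNIV - {\<omega>. parity l B \<omega>}"] by auto
      with pos show False by simp
    qed
    then obtain \<omega> where w: "\<not> parity l B \<omega>"
      "\<forall>p\<in>Sh \<times> Sh. snd p \<notin> Fo (fst p) (\<sigma> (fst p)) \<longrightarrow> (\<forall>n. \<not> (\<omega> !! n \<in> fst p \<and> \<omega> !! Suc n \<in> snd p))"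
      "\<forall>p\<in>Sigma Sh (\<lambda>d. Fu d (\<sigma> d)). (INFM n. \<omega> !! n \<in> fst p) \<longrightarrow> (INFM n. \<omega> !! n \<in> fst p \<and> \<omega> !! Suc n \<in> snd p)"
      "shd \<omega> \<in> c"
      by blast
    have wa: "\<forall>n. cell_of Sh (\<omega> !! Suc n) \<in> Fo (cell_of Sh (\<omega> !! n)) (\<sigma> (cell_of Sh (\<omega> !! n)))"
    proof (rule allI, rule ccontr)
      fix n
      let ?d = "cell_of Sh (\<omega> !! n)" and ?d' = "cell_of Sh (\<omega> !! Suc n)"
      assume "?d' \<notin> Fo ?d (\<sigma> ?d)"
      moreover have "(?d, ?d') \<in> Sh \<times> Sh" using cell_of_in by auto
      moreover note bspec[OF w(2), of "(?d, ?d')"]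
      ultimately have "\<not> (\<omega> !! n \<in> ?d \<and> \<omega> !! Suc n \<in> ?d')" by (simp only: fst_conv snd_conv) blast
      then show False using cell_of_in by blast
    qed
    have wb: "\<forall>d\<in>Sh. \<forall>d'\<in>Fu d (\<sigma> d). (INFM n. \<omega> !! n \<in> d) \<longrightarrow> (INFM n. \<omega> !! n \<in> d \<and> \<omega> !! Suc n \<in> d')"
    proof (intro ballI)
      fix d d' assume "d \<in> Sh" "d' \<in> Fu d (\<sigma> d)"
      then have mem: "(d, d') \<in> Sigma Sh (\<lambda>d. Fu d (\<sigma> d))" by simp
      show "(INFM n. \<omega> !! n \<in> d) \<longrightarrow> (INFM n. \<omega> !! n \<in> d \<and> \<omega> !! Suc n \<in> d')"
        using bspec[OF w(3) mem] by (simp only: fst_conv snd_conv)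
    qed
    have w0: "\<omega> !! 0 \<in> c" using w(4) by simp
    obtain C m where trp: "trap C m" using trap_from_path[OF wa wb w0 w(1)] by blast
    have "measure (run_measure (Qg (gstep \<sigma> (pi1 C m)) (prefv C m)) (GV0 c)) {\<omega>. parity l (Bhat Sh B) \<omega>} = 1"
      using win p1[OF trp] hist_Qg[of "gstep \<sigma> (pi1 C m)" "prefv C m"] by blast
    with game_lose[OF trp] show False by simp
  qed
qed

end

theorem theorem4:
  fixes T :: "'s::polish_space \<Rightarrow> 'u::finite \<Rightarrow> 's measure"
    and l :: nat and B :: "nat \<Rightarrow> 's set"
    and Sh :: "'s set set"
    and Fo Fu :: "'s set \<Rightarrow> 'u \<Rightarrow> 's set set"
    and \<sigma> :: "'s set \<Rightarrow> 'u"
    and c :: "'s set"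
  assumes "is_CMP T"
    and "is_priority_partition l B"
    and "is_abstraction l B Sh"
    and "valid_F T Sh Fo Fu"
    and "c \<in> Sh"
    and win: "\<forall>\<pi>1 Q. p1_strategy Sh Fo Fu \<pi>1 \<longrightarrow> is_hist_measure (gstep \<sigma> \<pi>1) Q \<longrightarrow>
                 measure (run_measure Q (GV0 c)) {\<omega>. parity l (Bhat Sh B) \<omega>} = 1"
  shows "\<forall>P. is_path_measure (\<lambda>s. T s (refine Sh \<sigma> s)) P \<longrightarrow> c \<subseteq> WinDom l B P"
proof (intro allI impI)
  fix P assume PM: "is_path_measure (\<lambda>s. T s (refine Sh \<sigma> s)) P"
  interpret setting T l B Sh Fo Fu \<sigma> c
    by (rule setting.intro) (fact assms(1), fact assms(2), fact assms(3), fact assms(4), fact assms(5))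
  show "c \<subseteq> WinDom l B P" by (rule main[OF win PM])
qed

end
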